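(* Let $X_1,X_2$ be complex Banach spaces, $\mathcal{A}_1\subseteq\mathcal{B}(X_1)$, $\mathcal{A}_2\subseteq\mathcal{B}(X_2)$ standard operator algebras, $r,s$ nonnegative integers with $r+s\geq1$, and $\Phi:\mathcal{A}_1\to\mathcal{A}_2$ a map whose range contains every operator in $\mathcal{B}(X_2)$ of rank at most two, satisfying $\sigma_\pi(B^rAB^s)=\sigma_\pi(\Phi(B)^r\Phi(A)\Phi(B)^s)$ for all $A,B\in\mathcal{A}_1$. Then: $\Phi(A)=0$ if and only if $A=0$; $\Phi$ is linear and injective; and for every $A\in\mathcal{A}_1$, $A$ has rank one if and only if $\Phi(A)$ has rank one.
   Context: A standard operator algebra on a complex Banach space $X$ is a subalgebra of $\mathcal{B}(X)$ containing all finite rank operators; it need not be closed or unital. The peripheral spectrum of $T$ is $\sigma_\pi(T)=\{z\in\sigma(T):|z|=r(T)\}$, where $r(T)$ is the spectral radius. *)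

theory Defs
  imports "HOL-Analysis.Analysis"
begin

class complex_banach = banach +
  fixes scaleC :: "complex \<Rightarrow> 'a \<Rightarrow> 'a"
  assumes scaleC_add_right: "scaleC a (x + y) = scaleC a x + scaleC a y"
    and scaleC_add_left: "scaleC (a + b) x = scaleC a x + scaleC b x"
    and scaleC_scaleC: "scaleC a (scaleC b x) = scaleC (a * b) x"
    and scaleC_one: "scaleC 1 x = x"
    and scaleR_scaleC: "scaleR r x = scaleC (complex_of_real r) x"
    and norm_scaleC: "norm (scaleC a x) = cmod a * norm x"

definition bops :: "('a::complex_banach \<Rightarrow> 'a) set" where
  "bops = {T. bounded_linear T \<and> (\<forall>c x. T (scaleC c x) = scaleC c (T x))}"

definition cspan :: "'a::complex_banach set \<Rightarrow> 'a set" where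
  "cspan V = {y. \<exists>c. y = (\<Sum>v\<in>V. scaleC (c v) v)}"

definition finite_rank :: "('a::complex_banach \<Rightarrow> 'a) \<Rightarrow> bool" where
  "finite_rank T \<longleftrightarrow> (\<exists>V. finite V \<and> range T \<subseteq> cspan V)"

text \<open>Rank = complex dimension of the range (meaningful for finite rank operators).\<close>
definition crank :: "('a::complex_banach \<Rightarrow> 'a) \<Rightarrow> nat" where
  "crank T = (LEAST n. \<exists>V. finite V \<and> card V = n \<and> range T \<subseteq> cspan V)"

definition rank_one :: "('a::complex_banach \<Rightarrow> 'a) \<Rightarrow> bool" where
  "rank_one T \<longleftrightarrow> finite_rank T \<and> crank T = 1"

definition rank_le :: "nat \<Rightarrow> ('a::complex_banach \<Rightarrow> 'a) \<Rightarrow> bool" where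
  "rank_le n T \<longleftrightarrow> finite_rank T \<and> crank T \<le> n"

definition standard_operator_algebra :: "('a::complex_banach \<Rightarrow> 'a) set \<Rightarrow> bool" where
  "standard_operator_algebra \<A> \<longleftrightarrow>
     \<A> \<subseteq> bops \<and>
     (\<forall>S\<in>\<A>. \<forall>T\<in>\<A>. (\<lambda>x. S x + T x) \<in> \<A>) \<and>
     (\<forall>S\<in>\<A>. \<forall>c. (\<lambda>x. scaleC c (S x)) \<in> \<A>) \<and>
     (\<forall>S\<in>\<A>. \<forall>T\<in>\<A>. S \<circ> T \<in> \<A>) \<and>
     {T\<in>bops. finite_rank T} \<subseteq> \<A>"

definition spectrum_op :: "('a::complex_banach \<Rightarrow> 'a) \<Rightarrow> complex set" where
  "spectrum_op T = {z. \<not> (\<exists>S\<in>bops. S \<circ> (\<lambda>x. T x - scaleC z x) = id \<and>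
                                     (\<lambda>x. T x - scaleC z x) \<circ> S = id)}"

definition spectral_radius_op :: "('a::complex_banach \<Rightarrow> 'a) \<Rightarrow> real" where
  "spectral_radius_op T = Sup (cmod ` spectrum_op T)"

definition peripheral_spectrum :: "('a::complex_banach \<Rightarrow> 'a) \<Rightarrow> complex set" where
  "peripheral_spectrum T = {z \<in> spectrum_op T. cmod z = spectral_radius_op T}"

end

theory Submission
  imports Defs
begin


lemma scaleC_zero_left[simp]: "scaleC 0 (x::'a::complex_banach) = 0"
  by (metis add_cancel_right_right scaleC_add_left add_0)

lemma scaleC_zero_right[simp]: "scaleC a (0::'a::complex_banach) = 0"
  by (metis add_cancel_right_right scaleC_add_right add_0)

lemma scaleC_minus_left: "scaleC (- a) (x::'a::complex_banach) = - scaleC a x"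
  by (metis add.inverse_unique scaleC_add_left scaleC_zero_left add.right_inverse)

lemma scaleC_minus_right: "scaleC a (- x::'a::complex_banach) = - scaleC a x"
  by (metis add.inverse_unique scaleC_add_right scaleC_zero_right add.right_inverse)

lemma scaleC_diff_left: "scaleC (a - b) (x::'a::complex_banach) = scaleC a x - scaleC b x"
proof -
  have "scaleC (a - b) x = scaleC (a + (- b)) x" by simp
  also have "\<dots> = scaleC a x + scaleC (- b) x" by (rule scaleC_add_left)
  also have "\<dots> = scaleC a x - scaleC b x" by (simp only: scaleC_minus_left diff_conv_add_uminus)
  finally show ?thesis .
qed

lemma scaleC_diff_right: "scaleC a (x - y::'a::complex_banach) = scaleC a x - scaleC a y"
proof -
  have "scaleC a (x - y) = scaleC a (x + (- y))" by simp
  also have "\<dots> = scaleC a x + scaleC a (- y)" by (rule scaleC_add_right)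
  also have "\<dots> = scaleC a x - scaleC a y" by (simp only: scaleC_minus_right diff_conv_add_uminus)
  finally show ?thesis .
qed

lemma scaleC_eq_0_iff[simp]: "scaleC a (x::'a::complex_banach) = 0 \<longleftrightarrow> a = 0 \<or> x = 0"
proof -
  have "scaleC a x = 0 \<longleftrightarrow> norm (scaleC a x) = 0" by simp
  also have "\<dots> \<longleftrightarrow> a = 0 \<or> x = 0" by (simp add: norm_scaleC)
  finally show ?thesis .
qed

lemma scaleC_sum_right: "scaleC a (sum f S) = (\<Sum>i\<in>S. scaleC a (f i::'a::complex_banach))"
  by (induction S rule: infinite_finite_induct) (auto simp: scaleC_add_right)

lemma scaleC_sum_left: "scaleC (sum f S) (x::'a::complex_banach) = (\<Sum>i\<in>S. scaleC (f i) x)"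
  by (induction S rule: infinite_finite_induct) (auto simp: scaleC_add_left)

lemma scaleC_cancel_left: "a \<noteq> 0 \<Longrightarrow> scaleC a x = scaleC a (y::'a::complex_banach) \<longleftrightarrow> x = y"
  by (metis scaleC_one scaleC_scaleC field_class.field_inverse mult.commute)

lemma scaleC_minus1: "scaleC (-1) (x::'a::complex_banach) = - x"
  by (simp add: scaleC_minus_left scaleC_one)

lemma bopsD:
  assumes "T \<in> bops"
  shows "T (x + y) = T x + T y" "T (scaleC c x) = scaleC c (T x)" "T 0 = 0"
    "T (- x) = - T x" "T (x - y) = T x - T y" "bounded_linear T"
  using assms unfolding bops_def
  by (auto simp: linear_simps)

lemma bops_sum: "T \<in> bops \<Longrightarrow> T (sum f S) = (\<Sum>i\<in>S. T (f i))"
  by (induction S rule: infinite_finite_induct) (auto simp: bopsD)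

lemma bopsI:
  assumes "\<And>x y. T (x + y) = T x + T y" "\<And>c x. T (scaleC c x) = scaleC c (T x)"
    "\<And>x. norm (T x) \<le> norm x * K"
  shows "T \<in> bops"
  unfolding bops_def
proof (intro CollectI conjI allI)
  show "bounded_linear T"
    by (rule bounded_linear_intro[where K=K]) (auto simp: assms scaleR_scaleC)
qed (auto simp: assms)

lemma bops_comp: "S \<in> bops \<Longrightarrow> T \<in> bops \<Longrightarrow> S \<circ> T \<in> bops"
  unfolding bops_def comp_def by (auto intro: bounded_linear_compose)

lemma bops_id: "id \<in> bops"
  unfolding bops_def by (auto simp: bounded_linear_ident[unfolded id_def] id_def)

lemma bops_id': "(\<lambda>x. x) \<in> bops"
  using bops_id by (simp add: id_def)

lemma bops_zero: "(\<lambda>x. 0) \<in> bops"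
  unfolding bops_def by auto

lemma bops_add: "S \<in> bops \<Longrightarrow> T \<in> bops \<Longrightarrow> (\<lambda>x. S x + T x) \<in> bops"
  unfolding bops_def by (auto intro: bounded_linear_add simp: scaleC_add_right)

lemma bops_scale: "S \<in> bops \<Longrightarrow> (\<lambda>x. scaleC c (S x)) \<in> bops"
proof -
  assume S: "S \<in> bops"
  then obtain K where K: "\<And>x. norm (S x) \<le> norm x * K"
    using bopsD(6)[OF S] bounded_linear.bounded by blast
  show ?thesis
  proof (rule bopsI[where K="cmod c * K"])
    show "norm (scaleC c (S x)) \<le> norm x * (cmod c * K)" for x
      using K[of x] mult_left_mono[OF K[of x], of "cmod c"] by (simp add: norm_scaleC algebra_simps)
  next
    show "scaleC c (S (x + y)) = scaleC c (S x) + scaleC c (S y)" for x y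
      by (simp add: bopsD[OF S] scaleC_add_right)
  next
    show "scaleC c (S (scaleC d x)) = scaleC d (scaleC c (S x))" for d x
      by (simp add: bopsD[OF S] scaleC_scaleC mult.commute[of c d])
  qed
qed

lemma bops_diff: "S \<in> bops \<Longrightarrow> T \<in> bops \<Longrightarrow> (\<lambda>x. S x - T x) \<in> bops"
proof -
  assume a: "S \<in> bops" "T \<in> bops"
  have "(\<lambda>x. S x + scaleC (-1) (T x)) \<in> bops"
    by (rule bops_add[OF a(1) bops_scale[OF a(2)]])
  moreover have "(\<lambda>x. S x + scaleC (-1) (T x)) = (\<lambda>x. S x - T x)"
    by (simp add: scaleC_minus1)
  ultimately show ?thesis by simp
qed

lemma bops_pow: assumes T: "T \<in> bops" shows "T ^^ n \<in> bops"
proof (induction n)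
  case 0 then show ?case by (simp add: bops_id')
next
  case (Suc n)
  show ?case unfolding funpow.simps(2) by (rule bops_comp[OF T Suc.IH])
qed

lemma funpow_zero_at0: assumes "T \<in> bops" shows "(T ^^ n) 0 = 0"
  using bopsD(3)[OF bops_pow[OF assms]] .



section \<open>Real Hahn-Banach (norm-dominated), via Zorn on graphs\<close>

definition good :: "'a::real_normed_vector \<Rightarrow> ('a \<times> real) set \<Rightarrow> bool" where
  "good x0 G \<longleftrightarrow> (\<forall>x a b. (x,a)\<in>G \<longrightarrow> (x,b)\<in>G \<longrightarrow> a = b)
     \<and> (\<forall>x a y b. (x,a)\<in>G \<longrightarrow> (y,b)\<in>G \<longrightarrow> (x+y, a+b) \<in> G)
     \<and> (\<forall>x a t. (x,a)\<in>G \<longrightarrow> (t *\<^sub>R x, t*a) \<in> G)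
     \<and> (\<forall>x a. (x,a)\<in>G \<longrightarrow> a \<le> norm x)
     \<and> (x0, norm x0) \<in> G"

lemma goodD:
  assumes "good x0 G"
  shows "(x,a)\<in>G \<Longrightarrow> (x,b)\<in>G \<Longrightarrow> a = b"
    "(x,a)\<in>G \<Longrightarrow> (y,b)\<in>G \<Longrightarrow> (x+y, a+b) \<in> G"
    "(x,a)\<in>G \<Longrightarrow> (t *\<^sub>R x, t*a) \<in> G"
    "(x,a)\<in>G \<Longrightarrow> a \<le> norm x"
    "(x0, norm x0) \<in> G"
  using assms unfolding good_def by blast+

lemma good_ext:
  fixes M :: "('a::real_normed_vector \<times> real) set"
  assumes g: "good x0 M" and y: "\<forall>a. (y,a) \<notin> M"
  shows "\<exists>G. good x0 G \<and> M \<subseteq> G \<and> G \<noteq> M"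
proof -
  have sv: "\<And>x a b. (x,a)\<in>M \<Longrightarrow> (x,b)\<in>M \<Longrightarrow> a = b"
   and ad: "\<And>x a z b. (x,a)\<in>M \<Longrightarrow> (z,b)\<in>M \<Longrightarrow> (x+z, a+b) \<in> M"
   and sc: "\<And>x a t. (x,a)\<in>M \<Longrightarrow> (t *\<^sub>R x, t*a) \<in> M"
   and bd: "\<And>x a. (x,a)\<in>M \<Longrightarrow> a \<le> norm x"
   and x0: "(x0, norm x0) \<in> M" using g unfolding good_def by blast+
  have zero: "(0, 0) \<in> M" using sc[OF x0, of 0] by simp
  define L where "L = {a - norm (x - y) | x a. (x,a) \<in> M}"
  have key: "a - norm (x - y) \<le> norm (x' + y) - a'" if "(x,a)\<in>M" "(x',a')\<in>M" for x a x' a'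
  proof -
    have "a + a' \<le> norm (x + x')" using bd[OF ad[OF that]] .
    also have "x + x' = (x - y) + (x' + y)" by simp
    also have "norm \<dots> \<le> norm (x - y) + norm (x' + y)" by (rule norm_triangle_ineq)
    finally show ?thesis by simp
  qed
  have Lne: "L \<noteq> {}" using zero unfolding L_def by blast
  have Lbd: "bdd_above L"
    unfolding bdd_above_def L_def using key[OF _ zero] by auto
  define c where "c = Sup L"
  have c_lo: "a - norm (x - y) \<le> c" if "(x,a)\<in>M" for x a
    unfolding c_def by (rule cSup_upper[OF _ Lbd]) (use that L_def in blast)
  have c_hi: "c \<le> norm (x' + y) - a'" if "(x',a')\<in>M" for x' a'
    unfolding c_def by (rule cSup_least[OF Lne]) (use key[OF _ that] L_def in blast)
  define G where "G = {(x + t *\<^sub>R y, a + t * c) | x a t. (x,a) \<in> M}"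
  have inM: "(x + t *\<^sub>R y, a + t * c) \<in> G" if "(x,a) \<in> M" for x a t
    unfolding G_def using that by blast
  have sub: "M \<subseteq> G"
  proof
    fix p assume "p \<in> M"
    then obtain x a where p: "p = (x,a)" "(x,a)\<in>M" by (cases p) auto
    show "p \<in> G" using inM[OF p(2), of 0] p(1) by simp
  qed
  have yG: "(y, c) \<in> G" using inM[OF zero, of 1] by simp
  have neq: "G \<noteq> M" using yG y by blast
  have goodG: "good x0 G"
    unfolding good_def
  proof (intro conjI allI impI)
    fix z a b assume za: "(z,a)\<in>G" and zb: "(z,b)\<in>G"
    from za obtain x1 a1 t1 where 1: "z = x1 + t1 *\<^sub>R y" "a = a1 + t1 * c" "(x1,a1)\<in>M"
      unfolding G_def by blast
    from zb obtain x2 a2 t2 where 2: "z = x2 + t2 *\<^sub>R y" "b = a2 + t2 * c" "(x2,a2)\<in>M"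
      unfolding G_def by blast
    have d: "(x1 + (-1) *\<^sub>R x2, a1 + (-1) * a2) \<in> M" using ad[OF 1(3) sc[OF 2(3)]] .
    have t: "t1 = t2"
    proof (rule ccontr)
      assume ne: "t1 \<noteq> t2"
      have "x1 - x2 = (t2 - t1) *\<^sub>R y" using 1(1) 2(1) by (simp add: algebra_simps)
      then have "y = (1 / (t2 - t1)) *\<^sub>R (x1 + (-1) *\<^sub>R x2)" using ne by simp
      then show False using sc[OF d, of "1 / (t2 - t1)"] y by metis
    qed
    then have "x1 = x2" using 1(1) 2(1) by simp
    then have "a1 = a2" using sv 1(3) 2(3) by blast
    then show "a = b" using 1 2 t by simp
  next
    fix z a w b assume za: "(z,a)\<in>G" and wb: "(w,b)\<in>G"
    from za obtain x1 a1 t1 where 1: "z = x1 + t1 *\<^sub>R y" "a = a1 + t1 * c" "(x1,a1)\<in>M"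
      unfolding G_def by blast
    from wb obtain x2 a2 t2 where 2: "w = x2 + t2 *\<^sub>R y" "b = a2 + t2 * c" "(x2,a2)\<in>M"
      unfolding G_def by blast
    have "(x1 + x2 + (t1 + t2) *\<^sub>R y, a1 + a2 + (t1 + t2) * c) \<in> G" by (rule inM[OF ad[OF 1(3) 2(3)]])
    then show "(z + w, a + b) \<in> G" using 1 2 by (simp add: algebra_simps)
  next
    fix z a t assume za: "(z,a)\<in>G"
    from za obtain x1 a1 t1 where 1: "z = x1 + t1 *\<^sub>R y" "a = a1 + t1 * c" "(x1,a1)\<in>M"
      unfolding G_def by blast
    have "(t *\<^sub>R x1 + (t * t1) *\<^sub>R y, t * a1 + (t * t1) * c) \<in> G" by (rule inM[OF sc[OF 1(3)]])
    then show "(t *\<^sub>R z, t * a) \<in> G" using 1 by (simp add: algebra_simps)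
  next
    fix z a assume za: "(z,a)\<in>G"
    from za obtain x1 a1 t where 1: "z = x1 + t *\<^sub>R y" "a = a1 + t * c" "(x1,a1)\<in>M"
      unfolding G_def by blast
    show "a \<le> norm z"
    proof (cases "t = 0")
      case True then show ?thesis using bd[OF 1(3)] 1 by simp
    next
      case False
      show ?thesis
      proof (cases "t > 0")
        case True
        have m: "((1/t) *\<^sub>R x1, (1/t) * a1) \<in> M" by (rule sc[OF 1(3)])
        have "c \<le> norm ((1/t) *\<^sub>R x1 + y) - (1/t) * a1" by (rule c_hi[OF m])
        then have "t * c \<le> t * (norm ((1/t) *\<^sub>R x1 + y) - (1/t) * a1)"
          using True by (simp add: mult_left_mono)
        also have "\<dots> = t * norm ((1/t) *\<^sub>R x1 + y) - a1"
          using True by (simp add: right_diff_distrib)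
        also have "t * norm ((1/t) *\<^sub>R x1 + y) = norm (t *\<^sub>R ((1/t) *\<^sub>R x1 + y))"
          using True by simp
        also have "t *\<^sub>R ((1/t) *\<^sub>R x1 + y) = z" using True 1(1) by (simp add: algebra_simps)
        finally show ?thesis using 1(2) by simp
      next
        case nt: False
        with False have tn: "t < 0" by simp
        define u where "u = - t"
        have u: "u > 0" using tn u_def by simp
        have m: "((1/u) *\<^sub>R x1, (1/u) * a1) \<in> M" by (rule sc[OF 1(3)])
        have "(1/u) * a1 - norm ((1/u) *\<^sub>R x1 - y) \<le> c" by (rule c_lo[OF m])
        then have "u * ((1/u) * a1 - norm ((1/u) *\<^sub>R x1 - y)) \<le> u * c"
          using u by (simp add: mult_left_mono)
        moreover have "u * ((1/u) * a1 - norm ((1/u) *\<^sub>R x1 - y)) = a1 - u * norm ((1/u) *\<^sub>R x1 - y)"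
          using u by (simp add: right_diff_distrib)
        moreover have "u * norm ((1/u) *\<^sub>R x1 - y) = norm (u *\<^sub>R ((1/u) *\<^sub>R x1 - y))"
          using u by simp
        ultimately have "a1 - norm (u *\<^sub>R ((1/u) *\<^sub>R x1 - y)) \<le> u * c"
          by simp
        also have "u *\<^sub>R ((1/u) *\<^sub>R x1 - y) = z" using u 1(1) u_def by (simp add: algebra_simps)
        finally show ?thesis using 1(2) u_def by simp
      qed
    qed
  next
    show "(x0, norm x0) \<in> G" using sub x0 by blast
  qed
  show ?thesis using goodG sub neq by blast
qed

lemma real_hb:
  fixes x0 :: "'a::real_normed_vector"
  shows "\<exists>g. (\<forall>x y. g (x + y) = g x + g y) \<and> (\<forall>t x. g (t *\<^sub>R x) = t * g x)
            \<and> (\<forall>x. g x \<le> norm x) \<and> g x0 = norm x0"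
proof -
  define G0 where "G0 = {(t *\<^sub>R x0, t * norm x0) | t. True}"
  have G0: "good x0 G0"
    unfolding good_def G0_def
  proof (intro conjI allI impI)
    fix x a b assume "(x, a) \<in> {(t *\<^sub>R x0, t * norm x0) |t. True}" "(x, b) \<in> {(t *\<^sub>R x0, t * norm x0) |t. True}"
    then obtain t1 t2 where "x = t1 *\<^sub>R x0" "a = t1 * norm x0" "x = t2 *\<^sub>R x0" "b = t2 * norm x0" by blast
    then have "t1 = t2 \<or> x0 = 0" by (metis scaleR_cancel_right)
    then show "a = b" using \<open>a = t1 * norm x0\<close> \<open>b = t2 * norm x0\<close> by auto
  next
    fix x a y b assume "(x, a) \<in> {(t *\<^sub>R x0, t * norm x0) |t. True}" "(y, b) \<in> {(t *\<^sub>R x0, t * norm x0) |t. True}"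
    then obtain t1 t2 where "x = t1 *\<^sub>R x0" "a = t1 * norm x0" "y = t2 *\<^sub>R x0" "b = t2 * norm x0" by blast
    then show "(x + y, a + b) \<in> {(t *\<^sub>R x0, t * norm x0) |t. True}"
      by (auto intro!: exI[of _ "t1 + t2"] simp: algebra_simps)
  next
    fix x a t assume "(x, a) \<in> {(t *\<^sub>R x0, t * norm x0) |t. True}"
    then obtain t1 where "x = t1 *\<^sub>R x0" "a = t1 * norm x0" by blast
    then show "(t *\<^sub>R x, t * a) \<in> {(t *\<^sub>R x0, t * norm x0) |t. True}"
      by (auto intro!: exI[of _ "t * t1"] simp: algebra_simps)
  next
    fix x a assume "(x, a) \<in> {(t *\<^sub>R x0, t * norm x0) |t. True}"
    then obtain t1 where "x = t1 *\<^sub>R x0" "a = t1 * norm x0" by blast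
    then show "a \<le> norm x" by (simp add: mult_right_mono)
  next
    show "(x0, norm x0) \<in> {(t *\<^sub>R x0, t * norm x0) |t. True}"
      by (auto intro!: exI[of _ 1])
  qed
  define A where "A = {G. good x0 G}"
  have "\<forall>C\<in>chains A. \<exists>U\<in>A. \<forall>X\<in>C. X \<subseteq> U"
  proof
    fix C assume C: "C \<in> chains A"
    show "\<exists>U\<in>A. \<forall>X\<in>C. X \<subseteq> U"
    proof (cases "C = {}")
      case True then show ?thesis using G0 A_def by blast
    next
      case False
      have CA: "\<And>X. X \<in> C \<Longrightarrow> good x0 X" using C unfolding chains_def A_def by blast
      have ch: "\<And>X Y. X \<in> C \<Longrightarrow> Y \<in> C \<Longrightarrow> X \<subseteq> Y \<or> Y \<subseteq> X"
        using C unfolding chains_def chain_subset_def by blast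
      have "good x0 (\<Union>C)"
        unfolding good_def
      proof (intro conjI allI impI)
        fix x a b assume "(x,a) \<in> \<Union>C" "(x,b) \<in> \<Union>C"
        then obtain X Y where "X\<in>C" "Y\<in>C" "(x,a)\<in>X" "(x,b)\<in>Y" by blast
        then show "a = b" using ch[of X Y] goodD(1)[OF CA[of X]] goodD(1)[OF CA[of Y]] by blast
      next
        fix x a y b assume "(x,a) \<in> \<Union>C" "(y,b) \<in> \<Union>C"
        then obtain X Y where XY: "X\<in>C" "Y\<in>C" "(x,a)\<in>X" "(y,b)\<in>Y" by blast
        then show "(x + y, a + b) \<in> \<Union>C" using ch[of X Y] goodD(2)[OF CA[of X]] goodD(2)[OF CA[of Y]]
          by (meson UnionI subsetD)
      next
        fix x a t assume "(x,a) \<in> \<Union>C"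
        then obtain X where "X\<in>C" "(x,a)\<in>X" by blast
        then show "(t *\<^sub>R x, t * a) \<in> \<Union>C" using goodD(3)[OF CA[of X]] by blast
      next
        fix x a assume "(x,a) \<in> \<Union>C"
        then obtain X where "X\<in>C" "(x,a)\<in>X" by blast
        then show "a \<le> norm x" using goodD(4)[OF CA[of X]] by blast
      next
        obtain X where "X \<in> C" using False by blast
        then show "(x0, norm x0) \<in> \<Union>C" using goodD(5)[OF CA[of X]] by blast
      qed
      then show ?thesis unfolding A_def by blast
    qed
  qed
  from Zorn_Lemma2[OF this] obtain M where M: "M \<in> A" "\<And>X. X \<in> A \<Longrightarrow> M \<subseteq> X \<Longrightarrow> X = M"
    by blast
  have gM: "good x0 M" using M A_def by blast
  have tot: "\<exists>a. (y,a) \<in> M" for y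
  proof (rule ccontr)
    assume "\<not> (\<exists>a. (y,a) \<in> M)"
    then obtain G where "good x0 G" "M \<subseteq> G" "G \<noteq> M" using good_ext[OF gM] by blast
    then show False using M(2)[of G] A_def by blast
  qed
  have sv: "\<And>x a b. (x,a)\<in>M \<Longrightarrow> (x,b)\<in>M \<Longrightarrow> a = b"
   and ad: "\<And>x a z b. (x,a)\<in>M \<Longrightarrow> (z,b)\<in>M \<Longrightarrow> (x+z, a+b) \<in> M"
   and sc: "\<And>x a t. (x,a)\<in>M \<Longrightarrow> (t *\<^sub>R x, t*a) \<in> M"
   and bd: "\<And>x a. (x,a)\<in>M \<Longrightarrow> a \<le> norm x"
   and x0: "(x0, norm x0) \<in> M" using gM unfolding good_def by blast+
  define g where "g x = (THE a. (x,a) \<in> M)" for x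
  have gM': "(x, g x) \<in> M" for x
    unfolding g_def by (rule theI') (use tot sv in blast)
  have geq: "(x,a) \<in> M \<Longrightarrow> g x = a" for x a using sv gM' by blast
  show ?thesis
  proof (intro exI[of _ g] conjI allI)
    show "g (x + y) = g x + g y" for x y using geq[OF ad[OF gM' gM']] .
    show "g (t *\<^sub>R x) = t * g x" for t x using geq[OF sc[OF gM']] .
    show "g x \<le> norm x" for x using bd[OF gM'] .
    show "g x0 = norm x0" using geq[OF x0] .
  qed
qed



definition cdual :: "('a::complex_banach \<Rightarrow> complex) set" where
  "cdual = {g. (\<forall>x y. g (x + y) = g x + g y) \<and> (\<forall>c x. g (scaleC c x) = c * g x)
              \<and> (\<exists>K. \<forall>x. cmod (g x) \<le> K * norm x)}"

lemma cdualD: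
  assumes "g \<in> cdual"
  shows "g (x + y) = g x + g y" "g (scaleC c x) = c * g x" "g 0 = 0" "g (- x) = - g x"
    "g (x - y) = g x - g y"
proof -
  have a: "\<And>x y. g (x + y) = g x + g y" and h: "\<And>c x. g (scaleC c x) = c * g x"
    using assms unfolding cdual_def by blast+
  show "g (x + y) = g x + g y" by (rule a)
  show "g (scaleC c x) = c * g x" by (rule h)
  show z: "g 0 = 0" using h[of 0 0] by simp
  show m: "g (- x) = - g x" using h[of "-1" x] by (simp add: scaleC_minus1)
  show "g (x - y) = g x - g y" using a[of x "- y"] h[of "-1" y] by (simp add: scaleC_minus1)
qed

lemma cdualI:
  assumes "\<And>x y. g (x + y) = g x + g y" "\<And>c x. g (scaleC c x) = c * g x"
    "\<And>x. cmod (g x) \<le> K * norm x"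
  shows "g \<in> cdual"
  unfolding cdual_def using assms by blast

lemma cdual_bound: "g \<in> cdual \<Longrightarrow> \<exists>K. \<forall>x. cmod (g x) \<le> K * norm x"
  unfolding cdual_def by blast

lemma cdual_sum: "g \<in> cdual \<Longrightarrow> g (sum f S) = (\<Sum>i\<in>S. g (f i))"
  by (induction S rule: infinite_finite_induct) (auto simp: cdualD)

lemma cdual_add: "g \<in> cdual \<Longrightarrow> h \<in> cdual \<Longrightarrow> (\<lambda>x. g x + h x) \<in> cdual"
proof -
  assume g: "g \<in> cdual" and h: "h \<in> cdual"
  obtain K1 where K1: "\<And>x. cmod (g x) \<le> K1 * norm x" using cdual_bound[OF g] by blast
  obtain K2 where K2: "\<And>x. cmod (h x) \<le> K2 * norm x" using cdual_bound[OF h] by blast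
  have "cmod (g x + h x) \<le> (K1 + K2) * norm x" for x
    using norm_triangle_ineq[of "g x" "h x"] K1[of x] K2[of x] by (simp add: algebra_simps)
  then show ?thesis using g h by (intro cdualI[where K="K1 + K2"]) (auto simp: cdualD algebra_simps)
qed

lemma cdual_scale: "g \<in> cdual \<Longrightarrow> (\<lambda>x. c * g x) \<in> cdual"
proof -
  assume g: "g \<in> cdual"
  obtain K1 where K1: "\<And>x. cmod (g x) \<le> K1 * norm x" using cdual_bound[OF g] by blast
  have "cmod (c * g x) \<le> (cmod c * K1) * norm x" for x
    using mult_left_mono[OF K1[of x], of "cmod c"] by (simp add: norm_mult algebra_simps)
  then show ?thesis using g by (intro cdualI[where K="cmod c * K1"]) (auto simp: cdualD algebra_simps)
qed

lemma cdual_zero: "(\<lambda>x. 0) \<in> cdual"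
  by (rule cdualI[where K=0]) auto

lemma cdual_sumf: "finite S \<Longrightarrow> (\<And>i. i \<in> S \<Longrightarrow> g i \<in> cdual) \<Longrightarrow> (\<lambda>x. \<Sum>i\<in>S. g i x) \<in> cdual"
proof (induction S rule: finite_induct)
  case empty then show ?case by (simp add: cdual_zero)
next
  case (insert a S)
  then show ?case using cdual_add[of "g a" "\<lambda>x. \<Sum>i\<in>S. g i x"] by simp
qed

lemma cdual_comp: "g \<in> cdual \<Longrightarrow> T \<in> bops \<Longrightarrow> (\<lambda>x. g (T x)) \<in> cdual"
proof -
  assume g: "g \<in> cdual" and T: "T \<in> bops"
  obtain K1 where K1: "\<And>x. cmod (g x) \<le> K1 * norm x" using cdual_bound[OF g] by blast
  obtain K2 where K2: "\<And>x. norm (T x) \<le> norm x * K2"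
    using bounded_linear.bounded[OF bopsD(6)[OF T]] by blast
  have "cmod (g (T x)) \<le> (\<bar>K1\<bar> * K2) * norm x" for x
  proof -
    have "cmod (g (T x)) \<le> \<bar>K1\<bar> * norm (T x)"
      using K1[of "T x"] by (meson abs_ge_self mult_right_mono norm_ge_zero order_trans)
    also have "\<dots> \<le> \<bar>K1\<bar> * (norm x * K2)" using K2[of x] by (simp add: mult_left_mono)
    finally show ?thesis by (simp add: algebra_simps)
  qed
  then show ?thesis using g T by (intro cdualI[where K="\<bar>K1\<bar> * K2"]) (auto simp: cdualD bopsD)
qed

section \<open>Complex Hahn-Banach consequence\<close>

lemma scaleC_decomp: "scaleC c x = scaleR (Re c) x + scaleR (Im c) (scaleC \<i> (x::'a::complex_banach))"
proof -
  have "scaleR (Re c) x + scaleR (Im c) (scaleC \<i> x)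
      = scaleC (complex_of_real (Re c)) x + scaleC (complex_of_real (Im c) * \<i>) x"
    by (simp add: scaleR_scaleC scaleC_scaleC)
  also have "\<dots> = scaleC (complex_of_real (Re c) + complex_of_real (Im c) * \<i>) x"
    by (simp add: scaleC_add_left)
  also have "complex_of_real (Re c) + complex_of_real (Im c) * \<i> = c"
    by (simp add: complex_eq_iff)
  finally show ?thesis by simp
qed

lemma cplx_aux: "complex_of_real (Re c * p + Im c * q) - \<i> * complex_of_real (- Im c * p + Re c * q)
   = c * (complex_of_real p - \<i> * complex_of_real q)"
proof (cases c)
  case (Complex a b)
  then show ?thesis by (simp add: complex_eq_iff)
qed

lemma chb:
  fixes x0 :: "'a::complex_banach"
  assumes x0: "x0 \<noteq> 0"
  shows "\<exists>g\<in>cdual. g x0 = 1"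
proof -
  obtain g where gadd: "\<And>x y. g (x + y) = g x + g y" and gsc: "\<And>t x. g (t *\<^sub>R x) = t * g x"
    and gb: "\<And>x. g x \<le> norm x" and g0: "g x0 = norm x0"
    using real_hb[of x0] by blast
  have gabs: "\<bar>g x\<bar> \<le> norm x" for x
  proof -
    have "- g x = g ((-1) *\<^sub>R x)" using gsc[of "-1" x] by simp
    also have "\<dots> \<le> norm ((-1) *\<^sub>R x)" by (rule gb)
    finally have "- g x \<le> norm x" by simp
    then show ?thesis using gb[of x] by simp
  qed
  define h where "h x = complex_of_real (g x) - \<i> * complex_of_real (g (scaleC \<i> x))" for x
  have hadd: "h (x + y) = h x + h y" for x y
    unfolding h_def by (simp add: gadd scaleC_add_right algebra_simps)
  have gC: "g (scaleC c x) = Re c * g x + Im c * g (scaleC \<i> x)" for c x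
    by (subst scaleC_decomp) (simp add: gadd gsc)
  have hsc: "h (scaleC c x) = c * h x" for c x
  proof -
    have "g (scaleC \<i> (scaleC c x)) = g (scaleC (\<i> * c) x)" by (simp only: scaleC_scaleC)
    also have "\<dots> = Re (\<i> * c) * g x + Im (\<i> * c) * g (scaleC \<i> x)" by (rule gC)
    finally have 1: "g (scaleC \<i> (scaleC c x)) = Re (\<i> * c) * g x + Im (\<i> * c) * g (scaleC \<i> x)" .
    have 2: "Re (\<i> * c) = - Im c" "Im (\<i> * c) = Re c" by simp_all
    show ?thesis unfolding h_def 1 2 gC[of c x] by (rule cplx_aux)
  qed
  have hb: "cmod (h x) \<le> 2 * norm x" for x
  proof -
    have "cmod (h x) \<le> cmod (complex_of_real (g x)) + cmod (\<i> * complex_of_real (g (scaleC \<i> x)))"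
      unfolding h_def by (rule norm_triangle_ineq4)
    also have "\<dots> = \<bar>g x\<bar> + \<bar>g (scaleC \<i> x)\<bar>" by (simp add: norm_mult)
    also have "\<dots> \<le> norm x + norm (scaleC \<i> x)" using gabs[of x] gabs[of "scaleC \<i> x"] by simp
    also have "norm (scaleC \<i> x) = norm x" by (simp add: norm_scaleC)
    finally show ?thesis by simp
  qed
  have hx0: "h x0 \<noteq> 0"
  proof
    assume "h x0 = 0"
    then have "Re (h x0) = 0" by simp
    then have "g x0 = 0" unfolding h_def by simp
    then show False using g0 x0 by simp
  qed
  define k where "k x = h x / h x0" for x
  have "k \<in> cdual"
    unfolding cdual_def
  proof (intro CollectI conjI allI exI)
    show "k (x + y) = k x + k y" for x y unfolding k_def by (simp add: hadd add_divide_distrib)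
    show "k (scaleC c x) = c * k x" for c x unfolding k_def by (simp add: hsc)
    show "cmod (k x) \<le> (2 / cmod (h x0)) * norm x" for x
      unfolding k_def using hb[of x] hx0 by (simp add: norm_divide divide_right_mono)
  qed
  moreover have "k x0 = 1" unfolding k_def using hx0 by simp
  ultimately show ?thesis by blast
qed

lemma exists_nonvanish: "(x::'a::complex_banach) \<noteq> 0 \<Longrightarrow> \<exists>g\<in>cdual. g x \<noteq> 0"
proof -
  assume "x \<noteq> 0"
  then obtain g where g: "g \<in> cdual" "g x = 1" using chb by blast
  show ?thesis
  proof (rule bexI[of _ g])
    show "g x \<noteq> 0" using g(2) by simp
  qed (rule g(1))
qed

lemma sep_vec:
  fixes y u u' :: "'a::complex_banach"
  assumes y: "y \<noteq> 0" and H: "\<And>g. g \<in> cdual \<Longrightarrow> g y \<noteq> 0 \<Longrightarrow> g u = g u'"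
  shows "u = u'"
proof (rule ccontr)
  assume ne: "u \<noteq> u'"
  define w where "w = u - u'"
  have w: "w \<noteq> 0" using ne w_def by simp
  have Hw: "g \<in> cdual \<Longrightarrow> g y \<noteq> 0 \<Longrightarrow> g w = 0" for g using H[of g] cdualD(5)[of g u u'] w_def by simp
  obtain g1 where g1: "g1 \<in> cdual" "g1 y = 1" using chb[OF y] by blast
  obtain g2 where g2: "g2 \<in> cdual" "g2 w = 1" using chb[OF w] by blast
  have g1w: "g1 w = 0" using Hw g1 by simp
  obtain t :: complex where t: "t \<noteq> 0" "1 + t * g2 y \<noteq> 0"
  proof (cases "1 + g2 y = 0")
    case True
    have "g2 y = (1 + g2 y) - 1" by simp
    also have "\<dots> = -1" using True by simp
    finally have "1 + (-1) * g2 y = 2" by simp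
    then have "1 + (-1) * g2 y \<noteq> 0" by simp
    then show ?thesis using that[of "-1"] by simp
  next
    case False then show ?thesis using that[of 1] by simp
  qed
  define g where "g x = g1 x + t * g2 x" for x
  have g: "g \<in> cdual" unfolding g_def by (rule cdual_add[OF g1(1) cdual_scale[OF g2(1)]])
  have "g y \<noteq> 0" unfolding g_def using g1 t by simp
  then have "g w = 0" using Hw g by blast
  moreover have "g w = t" unfolding g_def using g1w g2 by simp
  ultimately show False using t by simp
qed

definition rk1 :: "'a::complex_banach \<Rightarrow> ('a \<Rightarrow> complex) \<Rightarrow> ('a \<Rightarrow> 'a)" where
  "rk1 u g = (\<lambda>x. scaleC (g x) u)"

lemma rk1_bops: "g \<in> cdual \<Longrightarrow> rk1 u g \<in> bops"
proof -
  assume g: "g \<in> cdual"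
  obtain K where K: "\<And>x. cmod (g x) \<le> K * norm x" using cdual_bound[OF g] by blast
  show ?thesis unfolding rk1_def
  proof (rule bopsI[where K="K * norm u"])
    show "scaleC (g (x + y)) u = scaleC (g x) u + scaleC (g y) u" for x y
      by (simp add: cdualD[OF g] scaleC_add_left)
    show "scaleC (g (scaleC c x)) u = scaleC c (scaleC (g x) u)" for c x
      by (simp add: cdualD[OF g] scaleC_scaleC)
    show "norm (scaleC (g x) u) \<le> norm x * (K * norm u)" for x
      using mult_right_mono[OF K[of x], of "norm u"] by (simp add: norm_scaleC algebra_simps)
  qed
qed



section \<open>Biorthogonal systems\<close>

definition indepn :: "nat \<Rightarrow> (nat \<Rightarrow> 'a::complex_banach) \<Rightarrow> bool" where
  "indepn n w \<longleftrightarrow> (\<forall>c. (\<Sum>i<n. scaleC (c i) (w i)) = 0 \<longrightarrow> (\<forall>i<n. c i = 0))"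

definition bio :: "nat \<Rightarrow> (nat \<Rightarrow> 'a::complex_banach) \<Rightarrow> (nat \<Rightarrow> 'a \<Rightarrow> complex) \<Rightarrow> bool" where
  "bio n w g \<longleftrightarrow> (\<forall>i<n. g i \<in> cdual \<and> (\<forall>j<n. g i (w j) = (if i = j then 1 else 0)))"

lemma indepn_Suc: "indepn (Suc n) w \<Longrightarrow> indepn n w"
  unfolding indepn_def
proof (intro allI impI)
  fix c i assume H: "\<forall>c. (\<Sum>i<Suc n. scaleC (c i) (w i)) = 0 \<longrightarrow> (\<forall>i<Suc n. c i = 0)"
    and s: "(\<Sum>i<n. scaleC (c i) (w i)) = 0" and i: "i < n"
  define c' where "c' = c(n := 0)"
  have "(\<Sum>i<n. scaleC (c' i) (w i)) = (\<Sum>i<n. scaleC (c i) (w i))"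
    by (rule sum.cong) (auto simp: c'_def)
  then have "(\<Sum>i<Suc n. scaleC (c' i) (w i)) = 0" using s by (simp add: c'_def)
  then have "c' i = 0" using H i by auto
  then show "c i = 0" using i by (simp add: c'_def)
qed

lemma bio_exists: "indepn n w \<Longrightarrow> \<exists>g. bio n w g"
proof (induction n)
  case 0 then show ?case by (simp add: bio_def)
next
  case (Suc n)
  obtain g where g: "bio n w g" using Suc.IH[OF indepn_Suc[OF Suc.prems]] by blast
  have gd: "\<And>i. i < n \<Longrightarrow> g i \<in> cdual" and gw: "\<And>i j. i < n \<Longrightarrow> j < n \<Longrightarrow> g i (w j) = (if i = j then 1 else 0)"
    using g unfolding bio_def by blast+
  define w' where "w' = w n - (\<Sum>j<n. scaleC (g j (w n)) (w j))"
  have w': "w' \<noteq> 0"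
  proof
    assume w'0: "w' = 0"
    define c where "c i = (if i = n then 1 else - g i (w n))" for i
    have "(\<Sum>i<n. scaleC (c i) (w i)) = (\<Sum>i<n. - scaleC (g i (w n)) (w i))"
      by (rule sum.cong) (auto simp: c_def scaleC_minus_left)
    also have "\<dots> = - (\<Sum>i<n. scaleC (g i (w n)) (w i))" by (simp add: sum_negf)
    finally have "(\<Sum>i<Suc n. scaleC (c i) (w i)) = w'"
      by (simp add: c_def w'_def scaleC_one)
    then have "c n = 0" using Suc.prems w'0 unfolding indepn_def by blast
    then show False by (simp add: c_def)
  qed
  obtain h0 where h0: "h0 \<in> cdual" "h0 w' = 1" using chb[OF w'] by blast
  define h where "h x = h0 x + (-1) * (\<Sum>j<n. h0 (w j) * g j x)" for x
  have hd: "h \<in> cdual"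
    unfolding h_def
    by (rule cdual_add[OF h0(1) cdual_scale[OF cdual_sumf]]) (auto intro: cdual_scale gd)
  have hw: "h (w i) = 0" if i: "i < n" for i
  proof -
    have "(\<Sum>j<n. h0 (w j) * g j (w i)) = (\<Sum>j<n. if j = i then h0 (w j) else 0)"
      by (rule sum.cong) (auto simp: gw i)
    also have "\<dots> = h0 (w i)" using i by simp
    finally show ?thesis unfolding h_def by simp
  qed
  have hwn: "h (w n) = 1"
  proof -
    have "h0 w' = h0 (w n) - (\<Sum>j<n. g j (w n) * h0 (w j))"
      unfolding w'_def by (simp add: cdualD[OF h0(1)] cdual_sum[OF h0(1)])
    also have "\<dots> = h (w n)" unfolding h_def by (simp add: mult.commute)
    finally show ?thesis using h0(2) by simp
  qed
  define g' where "g' i = (if i = n then h else (\<lambda>x. g i x + (- g i (w n)) * h x))" for i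
  have "bio (Suc n) w g'"
    unfolding bio_def
  proof (intro allI impI conjI)
    fix i assume i: "i < Suc n"
    show "g' i \<in> cdual"
    proof (cases "i = n")
      case True then show ?thesis using hd by (simp add: g'_def)
    next
      case False
      then have "i < n" using i by simp
      have "(\<lambda>x. g i x + (- g i (w n)) * h x) \<in> cdual"
        by (rule cdual_add[OF gd[OF \<open>i < n\<close>] cdual_scale[OF hd]])
      then show ?thesis using False by (simp add: g'_def)
    qed
    fix j assume j: "j < Suc n"
    show "g' i (w j) = (if i = j then 1 else 0)"
    proof (cases "i = n")
      case True
      then show ?thesis using j hwn hw[of j] by (auto simp: g'_def less_Suc_eq)
    next
      case False
      then have i': "i < n" using i by simp
      show ?thesis
      proof (cases "j = n")
        case True
        then show ?thesis using False hwn by (simp add: g'_def)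
      next
        case False
        then have j': "j < n" using j by simp
        show ?thesis using \<open>i \<noteq> n\<close> hw[OF j'] gw[OF i' j'] by (simp add: g'_def)
      qed
    qed
  qed
  then show ?case by blast
qed

lemma prescribe:
  assumes "indepn n w"
  shows "\<exists>k\<in>cdual. \<forall>j<n. k (w j) = v j"
proof -
  obtain g where g: "bio n w g" using bio_exists[OF assms] by blast
  have gd: "\<And>i. i < n \<Longrightarrow> g i \<in> cdual" and gw: "\<And>i j. i < n \<Longrightarrow> j < n \<Longrightarrow> g i (w j) = (if i = j then 1 else 0)"
    using g unfolding bio_def by blast+
  define k where "k x = (\<Sum>i<n. v i * g i x)" for x
  have "k \<in> cdual" unfolding k_def by (rule cdual_sumf) (auto intro: cdual_scale gd)
  moreover have "k (w j) = v j" if j: "j < n" for j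
  proof -
    have "k (w j) = (\<Sum>i<n. if i = j then v i else 0)"
      unfolding k_def by (rule sum.cong) (auto simp: gw j)
    also have "\<dots> = v j" using j by simp
    finally show ?thesis .
  qed
  ultimately show ?thesis by blast
qed

definition ind2 :: "'a::complex_banach \<Rightarrow> 'a \<Rightarrow> bool" where
  "ind2 a b \<longleftrightarrow> (\<forall>\<alpha> \<beta>. scaleC \<alpha> a + scaleC \<beta> b = 0 \<longrightarrow> \<alpha> = 0 \<and> \<beta> = 0)"
definition ind3 :: "'a::complex_banach \<Rightarrow> 'a \<Rightarrow> 'a \<Rightarrow> bool" where
  "ind3 a b c \<longleftrightarrow> (\<forall>\<alpha> \<beta> \<gamma>. scaleC \<alpha> a + scaleC \<beta> b + scaleC \<gamma> c = 0 \<longrightarrow> \<alpha> = 0 \<and> \<beta> = 0 \<and> \<gamma> = 0)"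
definition ind4 :: "'a::complex_banach \<Rightarrow> 'a \<Rightarrow> 'a \<Rightarrow> 'a \<Rightarrow> bool" where
  "ind4 a b c d \<longleftrightarrow> (\<forall>\<alpha> \<beta> \<gamma> \<delta>. scaleC \<alpha> a + scaleC \<beta> b + scaleC \<gamma> c + scaleC \<delta> d = 0 \<longrightarrow> \<alpha> = 0 \<and> \<beta> = 0 \<and> \<gamma> = 0 \<and> \<delta> = 0)"

lemma sum2: "(\<Sum>i<2. f i) = f 0 + f (1::nat)" by (simp add: numeral_2_eq_2)
lemma sum3: "(\<Sum>i<3. f i) = f 0 + f 1 + f (2::nat)" by (simp add: numeral_3_eq_3 numeral_2_eq_2)
lemma sum4: "(\<Sum>i<4. f i) = f 0 + f 1 + f 2 + f (3::nat)"
proof -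
  have "(4::nat) = Suc 3" by simp
  then show ?thesis by (simp only: sum.lessThan_Suc sum3)
qed

lemma func2:
  assumes "ind2 a b" shows "\<exists>k\<in>cdual. k a = p \<and> k b = q"
proof -
  define w where "w i = (if i = 0 then a else b)" for i :: nat
  define v where "v i = (if i = 0 then p else q)" for i :: nat
  have "indepn 2 w" unfolding indepn_def
  proof (intro allI impI)
    fix c i assume "(\<Sum>i<2. scaleC (c i) (w i)) = 0" "i < (2::nat)"
    then show "c i = 0" using assms unfolding ind2_def sum2 w_def
      by (auto simp: less_2_cases_iff)
  qed
  from prescribe[OF this, of v] obtain k where "k \<in> cdual" "\<forall>j<2. k (w j) = v j" by blast
  then show ?thesis using spec[of _ 0] spec[of _ 1] unfolding w_def v_def
    by (metis one_neq_zero pos2 one_less_numeral_iff semiring_norm(76))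
qed

lemma func3:
  assumes "ind3 a b c" shows "\<exists>k\<in>cdual. k a = p \<and> k b = q \<and> k c = r"
proof -
  define w where "w i = [a,b,c] ! i" for i :: nat
  define v where "v i = [p,q,r] ! i" for i :: nat
  have "indepn 3 w" unfolding indepn_def
  proof (intro allI impI)
    fix d i assume s: "(\<Sum>i<3. scaleC (d i) (w i)) = 0" and i: "i < (3::nat)"
    have "d 0 = 0 \<and> d 1 = 0 \<and> d 2 = 0" using s assms unfolding ind3_def sum3 w_def by simp
    moreover have "i = 0 \<or> i = 1 \<or> i = 2" using i by auto
    ultimately show "d i = 0" by auto
  qed
  from prescribe[OF this, of v] obtain k where k: "k \<in> cdual" "\<forall>j<3. k (w j) = v j" by blast
  have "k a = p" using k(2)[rule_format, of 0] by (simp add: w_def v_def)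
  moreover have "k b = q" using k(2)[rule_format, of 1] by (simp add: w_def v_def)
  moreover have "k c = r" using k(2)[rule_format, of 2] by (simp add: w_def v_def)
  ultimately show ?thesis using k(1) by blast
qed

lemma func4:
  assumes "ind4 a b c e" shows "\<exists>k\<in>cdual. k a = p \<and> k b = q \<and> k c = r \<and> k e = t"
proof -
  define w where "w i = [a,b,c,e] ! i" for i :: nat
  define v where "v i = [p,q,r,t] ! i" for i :: nat
  have "indepn 4 w" unfolding indepn_def
  proof (intro allI impI)
    fix d i assume s: "(\<Sum>i<4. scaleC (d i) (w i)) = 0" and i: "i < (4::nat)"
    have "d 0 = 0 \<and> d 1 = 0 \<and> d 2 = 0 \<and> d 3 = 0" using s assms unfolding ind4_def sum4 w_def by simp
    moreover have "i = 0 \<or> i = 1 \<or> i = 2 \<or> i = 3" using i by auto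
    ultimately show "d i = 0" by auto
  qed
  from prescribe[OF this, of v] obtain k where k: "k \<in> cdual" "\<forall>j<4. k (w j) = v j" by blast
  have "k a = p" using k(2)[rule_format, of 0] by (simp add: w_def v_def)
  moreover have "k b = q" using k(2)[rule_format, of 1] by (simp add: w_def v_def)
  moreover have "k c = r" using k(2)[rule_format, of 2] by (simp add: w_def v_def)
  moreover have "k e = t" using k(2)[rule_format, of 3] by (simp add: w_def v_def)
  ultimately show ?thesis using k(1) by blast
qed



section \<open>Spectral computations\<close>

lemma spec_eig:
  fixes Z :: "'a::complex_banach \<Rightarrow> 'a"
  assumes v: "v \<noteq> 0" and ev: "Z v = scaleC z v"
  shows "z \<in> spectrum_op Z"
  unfolding spectrum_op_def
proof (clarify)
  fix S assume S: "S \<in> bops" and l: "S \<circ> (\<lambda>x. Z x - scaleC z x) = id"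
  have "v = (S \<circ> (\<lambda>x. Z x - scaleC z x)) v" using l by simp
  also have "\<dots> = S 0" using ev by simp
  also have "\<dots> = 0" using bopsD(3)[OF S] .
  finally show False using v by simp
qed

lemma notin_specI:
  fixes Z :: "'a::complex_banach \<Rightarrow> 'a"
  assumes "S \<in> bops" "\<And>x. S (Z x - scaleC z x) = x" "\<And>x. Z (S x) - scaleC z (S x) = x"
  shows "z \<notin> spectrum_op Z"
  unfolding spectrum_op_def using assms by (auto simp: fun_eq_iff)

lemma notin_spec_quad:
  fixes K :: "'a::complex_banach \<Rightarrow> 'a"
  assumes K: "K \<in> bops" and q: "\<And>x. K (K x) = scaleC c (K x)" and z: "z \<noteq> 0" "z \<noteq> c"
  shows "z \<notin> spectrum_op K"
proof -
  define a where "a = 1 / (z * (c - z))"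
  define b where "b = - 1 / z"
  have cz: "c - z \<noteq> 0" using z by simp
  have e1: "a * c + b - a * z = 0" unfolding a_def b_def using z cz
    by (simp add: field_simps)
  have e2: "b * z = -1" unfolding b_def using z by simp
  define S where "S x = scaleC a (K x) + scaleC b x" for x
  have S: "S \<in> bops" unfolding S_def by (intro bops_add bops_scale K bops_id')
  have key: "scaleC (a * c) (K x) + scaleC b (K x) - (scaleC (a * z) (K x) + scaleC (b * z) x) = x" for x
  proof -
    have "scaleC (a * c) (K x) + scaleC b (K x) - (scaleC (a * z) (K x) + scaleC (b * z) x)
        = scaleC (a * c + b - a * z) (K x) - scaleC (b * z) x"
      by (simp add: scaleC_add_left scaleC_diff_left algebra_simps)
    also have "\<dots> = x" using e1 e2 by (simp add: scaleC_minus1)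
    finally show ?thesis .
  qed
  show ?thesis
  proof (rule notin_specI[OF S])
    fix x
    show "S (K x - scaleC z x) = x"
      unfolding S_def using key[of x]
      by (simp add: bopsD[OF K] q scaleC_diff_right scaleC_scaleC mult.commute algebra_simps)
    show "K (S x) - scaleC z (S x) = x"
      unfolding S_def using key[of x]
      by (simp add: bopsD[OF K] q scaleC_add_right scaleC_scaleC mult.commute algebra_simps)
  qed
qed

lemma notin_spec_cub:
  fixes Z :: "'a::complex_banach \<Rightarrow> 'a"
  assumes Z: "Z \<in> bops" and q: "\<And>x. Z (Z (Z x)) = scaleC c (Z x)" and z: "z \<noteq> 0" "z * z \<noteq> c"
  shows "z \<notin> spectrum_op Z"
proof -
  define a where "a = 1 / (z * (c - z * z))"
  define b where "b = a * z"
  define d where "d = - 1 / z"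
  have cz: "c - z * z \<noteq> 0" using z by simp
  have e1: "a * c + d - b * z = 0" unfolding a_def b_def d_def using z cz
    by (simp add: field_simps)
  have e2: "d * z = -1" unfolding d_def using z by simp
  have e3: "b - a * z = 0" unfolding b_def by simp
  define S where "S x = scaleC a (Z (Z x)) + scaleC b (Z x) + scaleC d x" for x
  have S: "S \<in> bops" unfolding S_def
    by (intro bops_add bops_scale Z bops_id' bops_comp[OF Z Z, unfolded comp_def])
  have key: "scaleC (a * c) (Z x) + scaleC b (Z (Z x)) + scaleC d (Z x)
     - (scaleC (a * z) (Z (Z x)) + scaleC (b * z) (Z x) + scaleC (d * z) x) = x" for x
  proof -
    have "scaleC (a * c) (Z x) + scaleC b (Z (Z x)) + scaleC d (Z x)
     - (scaleC (a * z) (Z (Z x)) + scaleC (b * z) (Z x) + scaleC (d * z) x)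
        = scaleC (a * c + d - b * z) (Z x) + scaleC (b - a * z) (Z (Z x)) - scaleC (d * z) x"
      by (simp add: scaleC_add_left scaleC_diff_left algebra_simps)
    also have "\<dots> = x" using e1 e2 e3 by (simp add: scaleC_minus1)
    finally show ?thesis .
  qed
  show ?thesis
  proof (rule notin_specI[OF S])
    fix x
    show "S (Z x - scaleC z x) = x"
      unfolding S_def using key[of x]
      by (simp add: bopsD[OF Z] q scaleC_diff_right scaleC_scaleC mult.commute algebra_simps)
    show "Z (S x) - scaleC z (S x) = x"
      unfolding S_def using key[of x]
      by (simp add: bopsD[OF Z] q scaleC_add_right scaleC_scaleC mult.commute algebra_simps)
  qed
qed

lemma periph_single:
  fixes K :: "'a::complex_banach \<Rightarrow> 'a"
  assumes nt: "\<exists>v::'a. v \<noteq> 0" and K: "K \<in> bops" and q: "\<And>x. K (K x) = scaleC c (K x)"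
    and nz: "c = 0 \<or> (\<exists>x. K x \<noteq> 0)"
  shows "peripheral_spectrum K = {c}"
proof -
  have sub: "spectrum_op K \<subseteq> {0, c}" using notin_spec_quad[OF K q] by blast
  have cin: "c \<in> spectrum_op K"
  proof (cases "\<exists>x. K x \<noteq> 0")
    case True
    then obtain x where x: "K x \<noteq> 0" by blast
    show ?thesis by (rule spec_eig[of "K x" K c, OF x q])
  next
    case False
    then have c0: "c = 0" using nz by blast
    obtain v :: 'a where v: "v \<noteq> 0" using nt by blast
    have "K v = scaleC c v" using False c0 by simp
    then show ?thesis by (rule spec_eig[of v K, OF v])
  qed
  have sr: "spectral_radius_op K = cmod c"
    unfolding spectral_radius_op_def
  proof (rule cSup_eq_maximum)
    show "cmod c \<in> cmod ` spectrum_op K" using cin by blast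
    show "x \<le> cmod c" if "x \<in> cmod ` spectrum_op K" for x using that sub by auto
  qed
  show ?thesis
    unfolding peripheral_spectrum_def sr using sub cin by auto
qed

lemma periph_two:
  fixes Z :: "'a::complex_banach \<Rightarrow> 'a"
  assumes Z: "Z \<in> bops" and q: "\<And>x. Z (Z (Z x)) = scaleC (\<mu> * \<mu>) (Z x)" and mu: "\<mu> \<noteq> 0"
    and v1: "v1 \<noteq> 0" "Z v1 = scaleC \<mu> v1" and v2: "v2 \<noteq> 0" "Z v2 = scaleC (- \<mu>) v2"
  shows "\<mu> \<in> peripheral_spectrum Z" "- \<mu> \<in> peripheral_spectrum Z"
proof -
  have sub: "spectrum_op Z \<subseteq> {0, \<mu>, - \<mu>}"
  proof
    fix z assume z: "z \<in> spectrum_op Z"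
    show "z \<in> {0, \<mu>, - \<mu>}"
    proof (rule ccontr)
      assume "z \<notin> {0, \<mu>, - \<mu>}"
      then have "z \<noteq> 0" "z * z \<noteq> \<mu> * \<mu>" by (auto simp: square_eq_iff)
      then show False using notin_spec_cub[OF Z q] z by blast
    qed
  qed
  have i1: "\<mu> \<in> spectrum_op Z" by (rule spec_eig[of v1 Z, OF v1])
  have i2: "- \<mu> \<in> spectrum_op Z" by (rule spec_eig[of v2 Z, OF v2])
  have sr: "spectral_radius_op Z = cmod \<mu>"
    unfolding spectral_radius_op_def
  proof (rule cSup_eq_maximum)
    show "cmod \<mu> \<in> cmod ` spectrum_op Z" using i1 by blast
    show "x \<le> cmod \<mu>" if "x \<in> cmod ` spectrum_op Z" for x using that sub by auto
  qed
  show "\<mu> \<in> peripheral_spectrum Z" "- \<mu> \<in> peripheral_spectrum Z"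
    unfolding peripheral_spectrum_def sr using i1 i2 by auto
qed



lemma eig2:
  fixes t b e \<nu> :: complex
  assumes nu: "\<nu> \<noteq> 0" and eq: "\<nu> * \<nu> = t * t + b * e"
  shows "\<exists>c1 c2. (c1 \<noteq> 0 \<or> c2 \<noteq> 0) \<and> c1 * t + c2 * b = \<nu> * c1 \<and> c1 * e - c2 * t = \<nu> * c2"
proof (cases "b = 0 \<and> \<nu> - t = 0")
  case True
  then have bt: "b = 0" "\<nu> = t" by auto
  show ?thesis
  proof (intro exI conjI)
    show "\<nu> + t \<noteq> 0 \<or> e \<noteq> 0" using bt nu by auto
    show "(\<nu> + t) * t + e * b = \<nu> * (\<nu> + t)" using bt by (simp add: algebra_simps)
    show "(\<nu> + t) * e - e * t = \<nu> * e" by (simp add: algebra_simps)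
  qed
next
  case False
  show ?thesis
  proof (intro exI conjI)
    show "b \<noteq> 0 \<or> \<nu> - t \<noteq> 0" using False by auto
    show "b * t + (\<nu> - t) * b = \<nu> * b" by (simp add: algebra_simps)
    show "b * e - (\<nu> - t) * t = \<nu> * (\<nu> - t)" using eq by (simp add: algebra_simps)
  qed
qed

lemma fact2:
  fixes Z :: "'a::complex_banach \<Rightarrow> 'a"
  assumes Z: "Z \<in> bops" and f1: "f1 \<in> cdual" and f2: "f2 \<in> cdual"
    and Zd: "\<And>x. Z x = scaleC (f1 x) z1 + scaleC (f2 x) z2"
    and ind: "ind2 z1 z2" and tr: "f2 z2 = - f1 z1"
    and mu: "\<mu> \<noteq> 0" and det: "\<mu> * \<mu> = f1 z1 * f1 z1 + f1 z2 * f2 z1"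
  shows "\<mu> \<in> peripheral_spectrum Z" "- \<mu> \<in> peripheral_spectrum Z"
proof -
  define t where "t = f1 z1"
  define b where "b = f1 z2"
  define e where "e = f2 z1"
  define P where "P \<alpha> \<beta> = scaleC \<alpha> z1 + scaleC \<beta> z2" for \<alpha> \<beta>
  have Zz1: "Z z1 = P t e" unfolding P_def t_def e_def by (rule Zd)
  have Zz2: "Z z2 = P b (- t)" unfolding P_def b_def t_def using Zd[of z2] tr by simp
  have ZP: "Z (P \<alpha> \<beta>) = P (\<alpha> * t + \<beta> * b) (\<alpha> * e - \<beta> * t)" for \<alpha> \<beta>
  proof -
    have "Z (P \<alpha> \<beta>) = scaleC \<alpha> (Z z1) + scaleC \<beta> (Z z2)" unfolding P_def by (simp add: bopsD[OF Z])
    also have "\<dots> = P (\<alpha> * t + \<beta> * b) (\<alpha> * e - \<beta> * t)"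
      unfolding Zz1 Zz2 P_def by (simp add: scaleC_add_right scaleC_scaleC scaleC_add_left scaleC_diff_left scaleC_minus_left scaleC_diff_right scaleC_minus_right algebra_simps)
    finally show ?thesis .
  qed
  have ZxP: "Z x = P (f1 x) (f2 x)" for x unfolding P_def by (rule Zd)
  have sP: "scaleC c (P \<alpha> \<beta>) = P (c * \<alpha>) (c * \<beta>)" for c \<alpha> \<beta>
    unfolding P_def by (simp add: scaleC_add_right scaleC_scaleC)
  have cub: "Z (Z (Z x)) = scaleC (\<mu> * \<mu>) (Z x)" for x
  proof -
    define p where "p = f1 x"
    define q where "q = f2 x"
    have "Z (Z (Z x)) = P ((p * t + q * b) * t + (p * e - q * t) * b) ((p * t + q * b) * e - (p * e - q * t) * t)"
      unfolding ZxP[of x] ZP p_def q_def by (rule refl)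
    also have "(p * t + q * b) * t + (p * e - q * t) * b = (\<mu> * \<mu>) * p"
      using det unfolding t_def b_def e_def by (simp add: algebra_simps)
    also have "(p * t + q * b) * e - (p * e - q * t) * t = (\<mu> * \<mu>) * q"
      using det unfolding t_def b_def e_def by (simp add: algebra_simps)
    finally show ?thesis unfolding ZxP[of x] sP p_def q_def .
  qed
  have ev: "\<exists>v. v \<noteq> 0 \<and> Z v = scaleC \<nu> v" if nu: "\<nu> \<noteq> 0" "\<nu> * \<nu> = t * t + b * e" for \<nu>
  proof -
    obtain c1 c2 where c: "c1 \<noteq> 0 \<or> c2 \<noteq> 0" "c1 * t + c2 * b = \<nu> * c1" "c1 * e - c2 * t = \<nu> * c2"
      using eig2[OF nu] by blast
    have "P c1 c2 \<noteq> 0" using ind c(1) unfolding ind2_def P_def by blast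
    moreover have "Z (P c1 c2) = scaleC \<nu> (P c1 c2)" unfolding ZP sP c(2) c(3) ..
    ultimately show ?thesis by blast
  qed
  have d': "\<mu> * \<mu> = t * t + b * e" using det unfolding t_def b_def e_def .
  obtain v1 where v1: "v1 \<noteq> 0" "Z v1 = scaleC \<mu> v1" using ev[OF mu d'] by blast
  obtain v2 where v2: "v2 \<noteq> 0" "Z v2 = scaleC (- \<mu>) v2" using ev[of "- \<mu>"] mu d' by auto
  show "\<mu> \<in> peripheral_spectrum Z" "- \<mu> \<in> peripheral_spectrum Z"
    using periph_two[OF Z cub mu v1 v2] by auto
qed



definition clin :: "('a::complex_banach \<Rightarrow> complex) \<Rightarrow> bool" where
  "clin f \<longleftrightarrow> (\<forall>x y. f (x + y) = f x + f y) \<and> (\<forall>c x. f (scaleC c x) = c * f x)"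

lemma clinD: "clin f \<Longrightarrow> f (x + y) = f x + f y" "clin f \<Longrightarrow> f (scaleC c x) = c * f x"
  "clin f \<Longrightarrow> f 0 = 0"
  unfolding clin_def by auto (metis mult_zero_left scaleC_zero_left)

lemma cdual_clin: "f \<in> cdual \<Longrightarrow> clin f"
  unfolding clin_def by (auto simp: cdualD)

definition rkle1 :: "('a::complex_banach \<Rightarrow> 'a) \<Rightarrow> bool" where
  "rkle1 T \<longleftrightarrow> (\<exists>u. \<forall>x. \<exists>c. T x = scaleC c u)"

definition atmost1 :: "'b set \<Rightarrow> bool" where
  "atmost1 P \<longleftrightarrow> (\<forall>a b. a \<in> P \<longrightarrow> b \<in> P \<longrightarrow> a = b)"

lemma scaleC_right_cancel: "u \<noteq> 0 \<Longrightarrow> scaleC a u = scaleC b (u::'a::complex_banach) \<Longrightarrow> a = b"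
proof -
  assume u: "u \<noteq> 0" and e: "scaleC a u = scaleC b u"
  have "scaleC (a - b) u = 0" using e by (simp add: scaleC_diff_left)
  then show "a = b" using u by simp
qed

lemma rk1_form:
  fixes T :: "'a::complex_banach \<Rightarrow> 'a"
  assumes T: "T \<in> bops" and r: "rkle1 T"
  shows "\<exists>w g. clin g \<and> (\<forall>x. T x = scaleC (g x) w)"
proof -
  obtain u where u: "\<And>x. \<exists>c. T x = scaleC c u" using r unfolding rkle1_def by blast
  show ?thesis
  proof (cases "u = 0")
    case True
    then have "T x = scaleC 0 u" for x using u[of x] by auto
    then show ?thesis unfolding clin_def by (intro exI[of _ u] exI[of _ "\<lambda>x. 0"]) auto
  next
    case False
    define g where "g x = (SOME c. T x = scaleC c u)" for x
    have g: "T x = scaleC (g x) u" for x unfolding g_def by (rule someI_ex[OF u])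
    have "clin g" unfolding clin_def
    proof (intro allI conjI)
      fix x y
      have "scaleC (g (x + y)) u = scaleC (g x + g y) u"
        using g[of "x+y"] g[of x] g[of y] bopsD(1)[OF T, of x y] by (simp add: scaleC_add_left)
      then show "g (x + y) = g x + g y" using scaleC_right_cancel[OF False] by blast
    next
      fix c x
      have "scaleC (g (scaleC c x)) u = scaleC (c * g x) u"
        using g[of "scaleC c x"] g[of x] bopsD(2)[OF T, of c x] by (simp add: scaleC_scaleC)
      then show "g (scaleC c x) = c * g x" using scaleC_right_cancel[OF False] by blast
    qed
    then show ?thesis using g by blast
  qed
qed

lemma periph_form:
  fixes Z :: "'a::complex_banach \<Rightarrow> 'a"
  assumes nt: "\<exists>v::'a. v \<noteq> 0" and Z: "Z \<in> bops" and g: "clin g" and Zd: "\<And>x. Z x = scaleC (g x) w"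
  shows "peripheral_spectrum Z = {g w}"
proof (rule periph_single[OF nt Z])
  show "Z (Z x) = scaleC (g w) (Z x)" for x
    unfolding Zd[of x] by (simp add: bopsD(2)[OF Z] Zd[of w] scaleC_scaleC mult.commute)
  show "g w = 0 \<or> (\<exists>x. Z x \<noteq> 0)"
  proof (cases "g w = 0")
    case False
    then have "w \<noteq> 0" using clinD(3)[OF g] by auto
    then have "Z w \<noteq> 0" using False Zd[of w] by simp
    then show ?thesis by blast
  qed simp
qed

lemma R1:
  fixes T S :: "'a::complex_banach \<Rightarrow> 'a"
  assumes nt: "\<exists>v::'a. v \<noteq> 0" and T: "T \<in> bops" and S: "S \<in> bops" and r: "rkle1 T"
  shows "atmost1 (peripheral_spectrum ((S ^^ r) \<circ> T \<circ> (S ^^ s)))"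
proof -
  obtain w g where g: "clin g" and Td: "\<And>x. T x = scaleC (g x) w" using rk1_form[OF T r] by blast
  define g' where "g' x = g ((S ^^ s) x)" for x
  have g': "clin g'" unfolding clin_def g'_def using g bopsD[OF bops_pow[OF S, of s]] by (simp add: clinD)
  have Zd: "((S ^^ r) \<circ> T \<circ> (S ^^ s)) x = scaleC (g' x) ((S ^^ r) w)" for x
    by (simp add: Td g'_def bopsD(2)[OF bops_pow[OF S]])
  have Z: "(S ^^ r) \<circ> T \<circ> (S ^^ s) \<in> bops" by (intro bops_comp bops_pow S T)
  show ?thesis unfolding atmost1_def periph_form[OF nt Z g' Zd] by simp
qed

lemma pow_rk1:
  fixes B :: "'a::complex_banach \<Rightarrow> 'a"
  assumes f: "clin f" and Bd: "\<And>x. B x = scaleC (f x) x0"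
  shows "(B ^^ Suc n) y = scaleC (f x0 ^ n * f y) x0"
proof (induction n arbitrary: y)
  case 0 then show ?case by (simp add: Bd)
next
  case (Suc n)
  have "(B ^^ Suc (Suc n)) y = B ((B ^^ Suc n) y)" by simp
  also have "\<dots> = scaleC (f x0 ^ Suc n * f y) x0"
    unfolding Suc Bd by (simp add: clinD[OF f] algebra_simps)
  finally show ?case .
qed

lemma pow_rk1_x0:
  fixes B :: "'a::complex_banach \<Rightarrow> 'a"
  assumes f: "clin f" and Bd: "\<And>x. B x = scaleC (f x) x0"
  shows "(B ^^ n) x0 = scaleC (f x0 ^ n) x0"
proof (cases n)
  case 0 then show ?thesis by (simp add: scaleC_one)
next
  case (Suc k)
  then show ?thesis using pow_rk1[OF f Bd, of k x0] by (simp only: power_Suc2)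
qed

lemma periph_outer:
  fixes A B :: "'a::complex_banach \<Rightarrow> 'a"
  assumes nt: "\<exists>v::'a. v \<noteq> 0" and A: "A \<in> bops" and B: "B \<in> bops"
    and f: "clin f" and Bd: "\<And>x. B x = scaleC (f x) x0" and m: "r + s \<ge> 1"
  shows "peripheral_spectrum ((B ^^ r) \<circ> A \<circ> (B ^^ s)) = {f x0 ^ (r + s - 1) * f (A x0)}"
proof -
  have Z: "(B ^^ r) \<circ> A \<circ> (B ^^ s) \<in> bops" by (intro bops_comp bops_pow A B)
  show ?thesis
  proof (cases r)
    case 0
    then obtain k where s: "s = Suc k" using m by (cases s) auto
    define g where "g x = f x0 ^ k * f x" for x
    have g: "clin g" using f unfolding clin_def g_def by (simp add: algebra_simps)
    have Zd: "((B ^^ r) \<circ> A \<circ> (B ^^ s)) x = scaleC (g x) (A x0)" for x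
    proof -
      have "((B ^^ r) \<circ> A \<circ> (B ^^ s)) x = A ((B ^^ Suc k) x)" using 0 s by simp
      also have "\<dots> = A (scaleC (f x0 ^ k * f x) x0)" by (simp only: pow_rk1[OF f Bd])
      also have "\<dots> = scaleC (g x) (A x0)" by (simp add: bopsD(2)[OF A] g_def)
      finally show ?thesis .
    qed
    have "peripheral_spectrum ((B ^^ r) \<circ> A \<circ> (B ^^ s)) = {g (A x0)}"
      by (rule periph_form[OF nt Z g Zd])
    then show ?thesis by (simp add: g_def 0 s)
  next
    case (Suc k)
    define g where "g x = f x0 ^ k * f (A ((B ^^ s) x))" for x
    have g: "clin g" using f bopsD[OF bops_pow[OF B, of s]] bopsD[OF A]
      unfolding clin_def g_def by (simp add: algebra_simps)
    have Zd: "((B ^^ r) \<circ> A \<circ> (B ^^ s)) x = scaleC (g x) x0" for x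
    proof -
      have "((B ^^ r) \<circ> A \<circ> (B ^^ s)) x = (B ^^ Suc k) (A ((B ^^ s) x))" using Suc by simp
      also have "\<dots> = scaleC (g x) x0" by (simp only: pow_rk1[OF f Bd] g_def)
      finally show ?thesis .
    qed
    have "peripheral_spectrum ((B ^^ r) \<circ> A \<circ> (B ^^ s)) = {g x0}"
      by (rule periph_form[OF nt Z g Zd])
    also have "g x0 = f x0 ^ (r + s - 1) * f (A x0)"
      unfolding g_def pow_rk1_x0[OF f Bd] using Suc
      by (simp add: bopsD(2)[OF A] clinD[OF f] power_add algebra_simps)
    finally show ?thesis .
  qed
qed



lemma root_neg1: "m \<noteq> 0 \<Longrightarrow> \<exists>\<omega>::complex. \<omega> ^ m = -1"
proof -
  assume m: "m \<noteq> 0"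
  define \<omega> where "\<omega> = exp (\<i> * of_real pi / of_nat m)"
  have "\<omega> ^ m = exp (of_nat m * (\<i> * of_real pi / of_nat m))" unfolding \<omega>_def by (rule exp_of_nat_mult[symmetric])
  also have "of_nat m * (\<i> * of_real pi / of_nat m) = \<i> * of_real pi" using m by simp
  finally show ?thesis by auto
qed

lemma rank_le2I:
  fixes S :: "'a::complex_banach \<Rightarrow> 'a"
  assumes "\<And>x. \<exists>\<alpha> \<beta>. S x = scaleC \<alpha> v1 + scaleC \<beta> v2"
  shows "rank_le 2 S"
proof -
  have rng: "range S \<subseteq> cspan {v1, v2}"
  proof
    fix y assume "y \<in> range S"
    then obtain x where y: "y = S x" by blast
    obtain \<alpha> \<beta> where ab: "S x = scaleC \<alpha> v1 + scaleC \<beta> v2" using assms by blast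
    show "y \<in> cspan {v1, v2}"
    proof (cases "v1 = v2")
      case True
      have "y = (\<Sum>v\<in>{v1}. scaleC (\<alpha> + \<beta>) v)" using y ab True by (simp add: scaleC_add_left)
      then have yy: "y = (\<Sum>v\<in>{v1, v2}. scaleC (\<alpha> + \<beta>) v)" using True by simp
      show ?thesis unfolding cspan_def mem_Collect_eq using yy by (intro exI[of _ "\<lambda>v. \<alpha> + \<beta>"]) simp
    next
      case False
      define c where "c v = (if v = v1 then \<alpha> else \<beta>)" for v
      have "y = (\<Sum>v\<in>{v1, v2}. scaleC (c v) v)" using y ab False by (simp add: c_def)
      then show ?thesis unfolding cspan_def by blast
    qed
  qed
  have ex: "finite {v1, v2} \<and> card {v1, v2} = card {v1, v2} \<and> range S \<subseteq> cspan {v1, v2}"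
    using rng by simp
  have fr: "finite_rank S" unfolding finite_rank_def using ex by (intro exI[of _ "{v1, v2}"]) simp
  have "crank S \<le> card {v1, v2}"
    unfolding crank_def by (rule Least_le) (rule exI[of _ "{v1, v2}"], rule ex)
  also have "\<dots> \<le> 2" by (simp add: card_insert_le_m1)
  finally show ?thesis unfolding rank_le_def using fr by simp
qed

lemma gen_two:
  fixes T :: "'a::complex_banach \<Rightarrow> 'a"
  assumes T: "T \<in> bops" and k1: "k1 \<in> cdual" and k2: "k2 \<in> cdual"
    and b: "k1 v1 = 1" "k1 v2 = 0" "k2 v1 = 0" "k2 v2 = 1"
    and tr: "k1 (T v1) = k2 (T v2)"
    and det: "k1 (T v1) * k2 (T v2) - k1 (T v2) * k2 (T v1) \<noteq> 0"
    and m: "r + s \<ge> 1"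
  shows "\<exists>S\<in>bops. rank_le 2 S \<and> (\<exists>\<mu>. \<mu> \<noteq> 0 \<and> \<mu> \<in> peripheral_spectrum ((S ^^ r) \<circ> T \<circ> (S ^^ s))
            \<and> - \<mu> \<in> peripheral_spectrum ((S ^^ r) \<circ> T \<circ> (S ^^ s)))"
proof -
  have m0: "r + s \<noteq> 0" using m by linarith
  obtain \<omega> :: complex where om: "\<omega> ^ (r + s) = -1" using root_neg1[OF m0] by blast
  define K11 where "K11 = k1 (T v1)"
  define K12 where "K12 = k1 (T v2)"
  define K21 where "K21 = k2 (T v1)"
  define K22 where "K22 = k2 (T v2)"
  define D where "D = K11 * K22 - K12 * K21"
  have D: "D \<noteq> 0" using det unfolding D_def K11_def K12_def K21_def K22_def .
  have tr': "K22 = K11" using tr unfolding K11_def K22_def by simp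
  define \<mu> where "\<mu> = csqrt D"
  have mu: "\<mu> \<noteq> 0" using D unfolding \<mu>_def by simp
  have mu2: "\<mu> * \<mu> = D" unfolding \<mu>_def using power2_csqrt[of D] by (simp add: power2_eq_square)
  define S where "S x = scaleC (k1 x) v1 + scaleC (\<omega> * k2 x) v2" for x
  have Sb: "S \<in> bops" unfolding S_def
    using bops_add[OF rk1_bops[OF k1, of v1] rk1_bops[OF cdual_scale[OF k2, of \<omega>], of v2]]
    unfolding rk1_def .
  have Sr: "rank_le 2 S" by (rule rank_le2I[of S v1 v2]) (auto simp: S_def)
  have Spow: "(S ^^ Suc n) x = scaleC (k1 x) v1 + scaleC (\<omega> ^ Suc n * k2 x) v2" for n x
  proof (induction n arbitrary: x)
    case 0 then show ?case by (simp add: S_def)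
  next
    case (Suc n)
    have "(S ^^ Suc (Suc n)) x = S ((S ^^ Suc n) x)" by simp
    also have "\<dots> = scaleC (k1 x) v1 + scaleC (\<omega> ^ Suc (Suc n) * k2 x) v2"
      unfolding Suc S_def by (simp add: cdualD[OF k1] cdualD[OF k2] b mult.assoc)
    finally show ?case .
  qed
  have Sv1: "(S ^^ n) v1 = v1" for n
    by (cases n) (simp_all only: Spow b, simp_all add: scaleC_one)
  have Sv2: "(S ^^ n) v2 = scaleC (\<omega> ^ n) v2" for n
    by (cases n) (simp_all only: Spow b, simp_all add: scaleC_one)
  have ind: "ind2 v1 v2" unfolding ind2_def
  proof (intro allI impI)
    fix \<alpha> \<beta> assume "scaleC \<alpha> v1 + scaleC \<beta> v2 = 0"
    then have "k1 (scaleC \<alpha> v1 + scaleC \<beta> v2) = 0" "k2 (scaleC \<alpha> v1 + scaleC \<beta> v2) = 0"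
      by (simp_all add: cdualD[OF k1] cdualD[OF k2])
    then show "\<alpha> = 0 \<and> \<beta> = 0" by (simp add: cdualD[OF k1] cdualD[OF k2] b)
  qed
  define Z where "Z = (S ^^ r) \<circ> T \<circ> (S ^^ s)"
  have Z: "Z \<in> bops" unfolding Z_def by (intro bops_comp bops_pow Sb T)
  have "\<mu> \<in> peripheral_spectrum Z \<and> - \<mu> \<in> peripheral_spectrum Z"
  proof (cases r)
    case 0
    then obtain j where s: "s = Suc j" using m by (cases s) auto
    have oms: "\<omega> ^ s = -1" using om 0 by simp
    define f2 where "f2 x = \<omega> ^ s * k2 x" for x
    have f2: "f2 \<in> cdual" unfolding f2_def by (rule cdual_scale[OF k2])
    have Zd: "Z x = scaleC (k1 x) (T v1) + scaleC (f2 x) (T v2)" for x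
    proof -
      have "Z x = T ((S ^^ Suc j) x)" unfolding Z_def using 0 s by simp
      also have "\<dots> = T (scaleC (k1 x) v1 + scaleC (\<omega> ^ Suc j * k2 x) v2)" by (simp only: Spow)
      also have "\<dots> = scaleC (k1 x) (T v1) + scaleC (f2 x) (T v2)" by (simp add: bopsD[OF T] f2_def s)
      finally show ?thesis .
    qed
    have ind': "ind2 (T v1) (T v2)" unfolding ind2_def
    proof (intro allI impI)
      fix \<alpha> \<beta> assume "scaleC \<alpha> (T v1) + scaleC \<beta> (T v2) = 0"
      then have "k1 (scaleC \<alpha> (T v1) + scaleC \<beta> (T v2)) = 0" "k2 (scaleC \<alpha> (T v1) + scaleC \<beta> (T v2)) = 0"
        by (simp_all add: cdualD[OF k1] cdualD[OF k2])
      then have e: "\<alpha> * K11 + \<beta> * K12 = 0" "\<alpha> * K21 + \<beta> * K22 = 0"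
        unfolding K11_def K12_def K21_def K22_def by (simp_all add: cdualD[OF k1] cdualD[OF k2])
      have "\<alpha> * D = K22 * (\<alpha> * K11 + \<beta> * K12) - K12 * (\<alpha> * K21 + \<beta> * K22)"
        unfolding D_def by (simp add: algebra_simps)
      then have a: "\<alpha> = 0" using e D by simp
      have "\<beta> * D = K11 * (\<alpha> * K21 + \<beta> * K22) - K21 * (\<alpha> * K11 + \<beta> * K12)"
        unfolding D_def by (simp add: algebra_simps)
      then have "\<beta> = 0" using e D by simp
      then show "\<alpha> = 0 \<and> \<beta> = 0" using a by simp
    qed
    have trZ: "f2 (T v2) = - k1 (T v1)" unfolding f2_def oms using tr by simp
    have detZ: "\<mu> * \<mu> = k1 (T v1) * k1 (T v1) + k1 (T v2) * f2 (T v1)"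
      unfolding mu2 f2_def oms D_def using tr' unfolding K11_def K12_def K21_def K22_def by simp
    show ?thesis using fact2[OF Z k1 f2 Zd ind' trZ mu detZ] by blast
  next
    case (Suc i)
    define f1 where "f1 x = k1 (T ((S ^^ s) x))" for x
    define f2 where "f2 x = \<omega> ^ r * k2 (T ((S ^^ s) x))" for x
    have f1: "f1 \<in> cdual" unfolding f1_def by (rule cdual_comp[OF k1 bops_comp[OF T bops_pow[OF Sb]], unfolded comp_def])
    have f2: "f2 \<in> cdual" unfolding f2_def
      by (rule cdual_scale[OF cdual_comp[OF k2 bops_comp[OF T bops_pow[OF Sb]], unfolded comp_def]])
    have Zd: "Z x = scaleC (f1 x) v1 + scaleC (f2 x) v2" for x
      unfolding Z_def f1_def f2_def using Suc by (simp only: comp_apply Spow)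
    have trZ: "f2 v2 = - f1 v1"
    proof -
      have "f2 v2 = \<omega> ^ r * (\<omega> ^ s * k2 (T v2))" unfolding f2_def Sv2 by (simp add: bopsD(2)[OF T] cdualD[OF k2])
      also have "\<dots> = \<omega> ^ (r + s) * k2 (T v2)" by (simp add: power_add)
      also have "\<dots> = - f1 v1" unfolding om f1_def Sv1 using tr by simp
      finally show ?thesis .
    qed
    have detZ: "\<mu> * \<mu> = f1 v1 * f1 v1 + f1 v2 * f2 v1"
    proof -
      have "f1 v1 * f1 v1 + f1 v2 * f2 v1 = K11 * K11 + (\<omega> ^ s * K12) * (\<omega> ^ r * K21)"
        unfolding f1_def f2_def Sv1 Sv2 K11_def K12_def K21_def by (simp add: bopsD(2)[OF T] cdualD[OF k1])
      also have "\<dots> = K11 * K11 + \<omega> ^ (r + s) * (K12 * K21)" by (simp add: power_add algebra_simps)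
      also have "\<dots> = D" unfolding om D_def tr' by simp
      finally show ?thesis using mu2 by simp
    qed
    show ?thesis using fact2[OF Z f1 f2 Zd ind trZ mu detZ] by blast
  qed
  then show ?thesis using Sb Sr mu unfolding Z_def by blast
qed



lemma sum0_neg: "a + b = 0 \<Longrightarrow> b = - (a::'a::ab_group_add)"
  by (metis add.commute eq_neg_iff_add_eq_0)

lemma gen_two':
  fixes T :: "'a::complex_banach \<Rightarrow> 'a"
  assumes T: "T \<in> bops" and k1: "k1 \<in> cdual" and k2: "k2 \<in> cdual"
    and b: "k1 v1 = 1" "k1 v2 = 0" "k2 v1 = 0" "k2 v2 = 1"
    and tr: "k1 (T v1) = k2 (T v2)"
    and det: "k1 (T v1) * k2 (T v2) - k1 (T v2) * k2 (T v1) \<noteq> 0"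
    and m: "r + s \<ge> 1"
  shows "\<exists>S\<in>bops. rank_le 2 S \<and> \<not> atmost1 (peripheral_spectrum ((S ^^ r) \<circ> T \<circ> (S ^^ s)))"
proof -
  obtain S \<mu> where S: "S \<in> bops" "rank_le 2 S" "\<mu> \<noteq> 0" "\<mu> \<in> peripheral_spectrum ((S ^^ r) \<circ> T \<circ> (S ^^ s))"
    "- \<mu> \<in> peripheral_spectrum ((S ^^ r) \<circ> T \<circ> (S ^^ s))"
    using gen_two[OF T k1 k2 b tr det m] by blast
  have "\<mu> \<noteq> - \<mu>" using S(3) by simp
  then have "\<not> atmost1 (peripheral_spectrum ((S ^^ r) \<circ> T \<circ> (S ^^ s)))"
    unfolding atmost1_def using S(4,5) by blast
  then show ?thesis using S(1,2) by blast
qed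

lemma not_rkle1_pair:
  fixes T :: "'a::complex_banach \<Rightarrow> 'a"
  assumes T: "T \<in> bops" and nr: "\<not> rkle1 T"
  shows "\<exists>x1 x2. ind2 (T x1) (T x2)"
proof (rule ccontr)
  assume H: "\<not> (\<exists>x1 x2. ind2 (T x1) (T x2))"
  show False
  proof (cases "\<forall>x. T x = 0")
    case True
    then have "rkle1 T" unfolding rkle1_def by (intro exI[of _ 0]) simp
    then show False using nr by blast
  next
    case False
    then obtain x0 where x0: "T x0 \<noteq> 0" by blast
    have "\<exists>c. T x = scaleC c (T x0)" for x
    proof -
      from H have "\<not> ind2 (T x0) (T x)" by blast
      then obtain \<alpha> \<beta> where ab: "scaleC \<alpha> (T x0) + scaleC \<beta> (T x) = 0" "\<not> (\<alpha> = 0 \<and> \<beta> = 0)"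
        unfolding ind2_def by blast
      have b: "\<beta> \<noteq> 0"
      proof
        assume "\<beta> = 0"
        then have "scaleC \<alpha> (T x0) = 0" "\<alpha> \<noteq> 0" using ab by auto
        then show False using x0 by simp
      qed
      have "scaleC \<beta> (T x) = - scaleC \<alpha> (T x0)" using sum0_neg[OF ab(1)] .
      then have "scaleC (1 / \<beta>) (scaleC \<beta> (T x)) = scaleC (1 / \<beta>) (- scaleC \<alpha> (T x0))" by simp
      then have "T x = scaleC (- \<alpha> / \<beta>) (T x0)" using b
        by (simp add: scaleC_scaleC scaleC_one scaleC_minus_right scaleC_minus_left)
      then show ?thesis by blast
    qed
    then have "rkle1 T" unfolding rkle1_def by blast
    then show False using nr by blast
  qed
qed

lemma eig_range:
  fixes T :: "'a::complex_banach \<Rightarrow> 'a"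
  assumes T: "T \<in> bops"
    and nA: "\<And>u. \<not> ind3 u (T u) (T (T u))"
    and nB: "\<And>u p q. ind2 u (T u) \<Longrightarrow> T (T u) = scaleC p u + scaleC q (T u) \<Longrightarrow> p = 0"
  shows "\<exists>c. T (T u) = scaleC c (T u)"
proof (cases "ind2 u (T u)")
  case True
  obtain \<alpha> \<beta> \<gamma> where e: "scaleC \<alpha> u + scaleC \<beta> (T u) + scaleC \<gamma> (T (T u)) = 0"
    and nz: "\<not> (\<alpha> = 0 \<and> \<beta> = 0 \<and> \<gamma> = 0)"
    using nA[of u] unfolding ind3_def by blast
  have g: "\<gamma> \<noteq> 0"
  proof
    assume "\<gamma> = 0"
    then have "scaleC \<alpha> u + scaleC \<beta> (T u) = 0" using e by simp
    then have "\<alpha> = 0 \<and> \<beta> = 0" using True unfolding ind2_def by blast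
    then show False using nz \<open>\<gamma> = 0\<close> by blast
  qed
  have "scaleC \<gamma> (T (T u)) = - (scaleC \<alpha> u + scaleC \<beta> (T u))"
    using sum0_neg[OF e] .
  then have "scaleC (1 / \<gamma>) (scaleC \<gamma> (T (T u))) = scaleC (1 / \<gamma>) (- (scaleC \<alpha> u + scaleC \<beta> (T u)))"
    by simp
  then have TT: "T (T u) = scaleC (- \<alpha> / \<gamma>) u + scaleC (- \<beta> / \<gamma>) (T u)" using g
    by (simp add: scaleC_scaleC scaleC_one scaleC_minus_right scaleC_minus_left scaleC_add_right scaleC_diff_right)
  have "- \<alpha> / \<gamma> = 0" by (rule nB[OF True TT])
  then have "T (T u) = scaleC (- \<beta> / \<gamma>) (T u)" using TT by simp
  then show ?thesis by blast
next
  case False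
  then obtain \<alpha> \<beta> where e: "scaleC \<alpha> u + scaleC \<beta> (T u) = 0" and nz: "\<not> (\<alpha> = 0 \<and> \<beta> = 0)"
    unfolding ind2_def by blast
  show ?thesis
  proof (cases "\<beta> = 0")
    case True
    then have "u = 0" using e nz by simp
    then have "T (T u) = scaleC 0 (T u)" by (simp add: bopsD[OF T])
    then show ?thesis by blast
  next
    case b: False
    have "scaleC \<beta> (T u) = - scaleC \<alpha> u" using sum0_neg[OF e] .
    then have "scaleC (1 / \<beta>) (scaleC \<beta> (T u)) = scaleC (1 / \<beta>) (- scaleC \<alpha> u)" by simp
    then have Tu: "T u = scaleC (- \<alpha> / \<beta>) u" using b
      by (simp add: scaleC_scaleC scaleC_one scaleC_minus_right scaleC_minus_left)
    have "T (T u) = scaleC (- \<alpha> / \<beta>) (T u)" by (subst (1) Tu) (simp add: bopsD[OF T])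
    then show ?thesis by blast
  qed
qed



lemma R2:
  fixes T :: "'a::complex_banach \<Rightarrow> 'a"
  assumes T: "T \<in> bops" and nr: "\<not> rkle1 T" and m: "r + s \<ge> 1"
  shows "\<exists>S\<in>bops. rank_le 2 S \<and> \<not> atmost1 (peripheral_spectrum ((S ^^ r) \<circ> T \<circ> (S ^^ s)))"
proof (cases "\<exists>u. ind3 u (T u) (T (T u))")
  case True
  then obtain u where u: "ind3 u (T u) (T (T u))" by blast
  obtain k1 where k1: "k1 \<in> cdual" "k1 u = 1" "k1 (T u) = 0" "k1 (T (T u)) = 1" using func3[OF u] by blast
  obtain k2 where k2: "k2 \<in> cdual" "k2 u = 0" "k2 (T u) = 1" "k2 (T (T u)) = 0" using func3[OF u] by blast
  show ?thesis
    by (rule gen_two'[OF T k1(1) k2(1) _ _ _ _ _ _ m, of u "T u"]) (simp_all add: k1 k2)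
next
  case nA: False
  show ?thesis
  proof (cases "\<exists>u p q. ind2 u (T u) \<and> T (T u) = scaleC p u + scaleC q (T u) \<and> p \<noteq> 0")
    case True
    then obtain u p q where u: "ind2 u (T u)" and TT: "T (T u) = scaleC p u + scaleC q (T u)" and p: "p \<noteq> 0"
      by blast
    define t where "t = q / 2"
    define v2 where "v2 = T u - scaleC t u"
    have ind: "ind2 u v2" unfolding ind2_def
    proof (intro allI impI)
      fix \<alpha> \<beta> assume "scaleC \<alpha> u + scaleC \<beta> v2 = 0"
      then have "scaleC (\<alpha> - \<beta> * t) u + scaleC \<beta> (T u) = 0"
        unfolding v2_def by (simp add: scaleC_diff_right scaleC_diff_left scaleC_scaleC algebra_simps)
      then have "\<alpha> - \<beta> * t = 0 \<and> \<beta> = 0" using u unfolding ind2_def by blast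
      then show "\<alpha> = 0 \<and> \<beta> = 0" by simp
    qed
    obtain k1 where k1: "k1 \<in> cdual" "k1 u = 1" "k1 v2 = 0" using func2[OF ind] by blast
    obtain k2 where k2: "k2 \<in> cdual" "k2 u = 0" "k2 v2 = 1" using func2[OF ind] by blast
    have Tu: "T u = v2 + scaleC t u" unfolding v2_def by simp
    have Tv2: "T v2 = scaleC (p + (q - t) * t) u + scaleC (q - t) v2"
      unfolding v2_def
      by (simp add: bopsD[OF T] TT scaleC_diff_right scaleC_diff_left scaleC_add_left scaleC_scaleC algebra_simps)
    have qt: "q - t = t" unfolding t_def by simp
    show ?thesis
    proof (rule gen_two'[OF T k1(1) k2(1) _ _ _ _ _ _ m, of u v2])
      show "k1 (T u) = k2 (T v2)" unfolding Tu Tv2 qt by (simp add: cdualD[OF k1(1)] cdualD[OF k2(1)] k1 k2)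
      have "k1 (T u) * k2 (T v2) - k1 (T v2) * k2 (T u) = t * t - (p + t * t)"
        unfolding Tu Tv2 qt by (simp add: cdualD[OF k1(1)] cdualD[OF k2(1)] k1 k2)
      then show "k1 (T u) * k2 (T v2) - k1 (T v2) * k2 (T u) \<noteq> 0" using p by simp
    qed (simp_all add: k1 k2)
  next
    case nB: False
    obtain x1 x2 where a: "ind2 (T x1) (T x2)" using not_rkle1_pair[OF T nr] by blast
    have er: "\<exists>c. T (T u) = scaleC c (T u)" for u
      by (rule eig_range[OF T]) (use nA nB in blast)+
    obtain c1 where c1: "T (T x1) = scaleC c1 (T x1)" using er by blast
    obtain c2 where c2: "T (T x2) = scaleC c2 (T x2)" using er by blast
    obtain c3 where c3: "T (T (x1 + x2)) = scaleC c3 (T (x1 + x2))" using er by blast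
    have E: "scaleC c1 (T x1) + scaleC c2 (T x2) = scaleC c3 (T x1) + scaleC c3 (T x2)"
      using c3 by (simp add: bopsD[OF T] c1 c2 scaleC_add_right)
    have "scaleC (c1 - c3) (T x1) + scaleC (c2 - c3) (T x2)
        = (scaleC c1 (T x1) + scaleC c2 (T x2)) - (scaleC c3 (T x1) + scaleC c3 (T x2))"
      by (simp add: scaleC_diff_left algebra_simps)
    then have "scaleC (c1 - c3) (T x1) + scaleC (c2 - c3) (T x2) = 0" using E by simp
    then have "c1 - c3 = 0 \<and> c2 - c3 = 0" using a unfolding ind2_def by blast
    then have c12: "c2 = c1" by simp
    show ?thesis
    proof (cases "c1 = 0")
      case False
      obtain k1 where k1: "k1 \<in> cdual" "k1 (T x1) = 1" "k1 (T x2) = 0" using func2[OF a] by blast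
      obtain k2 where k2: "k2 \<in> cdual" "k2 (T x1) = 0" "k2 (T x2) = 1" using func2[OF a] by blast
      show ?thesis
      proof (rule gen_two'[OF T k1(1) k2(1) _ _ _ _ _ _ m, of "T x1" "T x2"])
        show "k1 (T (T x1)) = k2 (T (T x2))" unfolding c1 c2 c12 by (simp add: cdualD[OF k1(1)] cdualD[OF k2(1)] k1 k2)
        show "k1 (T (T x1)) * k2 (T (T x2)) - k1 (T (T x2)) * k2 (T (T x1)) \<noteq> 0"
          unfolding c1 c2 c12 using False by (simp add: cdualD[OF k1(1)] cdualD[OF k2(1)] k1 k2)
      qed (simp_all add: k1 k2)
    next
      case True
      have z1: "T (T x1) = 0" using c1 True by simp
      have z2: "T (T x2) = 0" using c2 c12 True by simp
      have i4: "ind4 x1 x2 (T x1) (T x2)" unfolding ind4_def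
      proof (intro allI impI)
        fix \<alpha> \<beta> \<gamma> \<delta> assume e: "scaleC \<alpha> x1 + scaleC \<beta> x2 + scaleC \<gamma> (T x1) + scaleC \<delta> (T x2) = 0"
        then have "T (scaleC \<alpha> x1 + scaleC \<beta> x2 + scaleC \<gamma> (T x1) + scaleC \<delta> (T x2)) = 0" by (simp add: bopsD[OF T])
        then have "scaleC \<alpha> (T x1) + scaleC \<beta> (T x2) = 0" by (simp add: bopsD[OF T] z1 z2)
        then have ab: "\<alpha> = 0 \<and> \<beta> = 0" using a unfolding ind2_def by blast
        then have "scaleC \<gamma> (T x1) + scaleC \<delta> (T x2) = 0" using e by simp
        then show "\<alpha> = 0 \<and> \<beta> = 0 \<and> \<gamma> = 0 \<and> \<delta> = 0" using a ab unfolding ind2_def by blast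
      qed
      obtain k1 where k1: "k1 \<in> cdual" "k1 x1 = 0" "k1 x2 = 0" "k1 (T x1) = 0" "k1 (T x2) = 1" using func4[OF i4] by blast
      obtain k2 where k2: "k2 \<in> cdual" "k2 x1 = 0" "k2 x2 = 0" "k2 (T x1) = 1" "k2 (T x2) = 0" using func4[OF i4] by blast
      have Tv1: "T (x1 + T x2) = T x1" by (simp add: bopsD[OF T] z2)
      have Tv2: "T (x2 + T x1) = T x2" by (simp add: bopsD[OF T] z1)
      show ?thesis
      proof (rule gen_two'[OF T k1(1) k2(1) _ _ _ _ _ _ m, of "x1 + T x2" "x2 + T x1"])
        show "k1 (T (x1 + T x2)) = k2 (T (x2 + T x1))" unfolding Tv1 Tv2 using k1 k2 by simp
        show "k1 (T (x1 + T x2)) * k2 (T (x2 + T x1)) - k1 (T (x2 + T x1)) * k2 (T (x1 + T x2)) \<noteq> 0"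
          unfolding Tv1 Tv2 using k1 k2 by simp
      qed (simp_all add: cdualD[OF k1(1)] cdualD[OF k2(1)] k1 k2)
    qed
  qed
qed



lemma soaD:
  assumes "standard_operator_algebra \<A>"
  shows "\<A> \<subseteq> bops" "S \<in> \<A> \<Longrightarrow> T \<in> \<A> \<Longrightarrow> (\<lambda>x. S x + T x) \<in> \<A>"
    "S \<in> \<A> \<Longrightarrow> (\<lambda>x. scaleC c (S x)) \<in> \<A>"
    "T \<in> bops \<Longrightarrow> finite_rank T \<Longrightarrow> T \<in> \<A>"
  using assms unfolding standard_operator_algebra_def by blast+

lemma cspan_empty: "cspan {} = {0}"
  unfolding cspan_def by simp

lemma zero_rank_le2: "rank_le 2 (\<lambda>x::'a::complex_banach. 0)"
  by (rule rank_le2I[of _ 0 0]) (auto intro!: exI[of _ 0])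

lemma rk1_rank_le2: "rank_le 2 (rk1 y f)"
  unfolding rk1_def
proof (rule rank_le2I[of _ y y])
  fix x show "\<exists>\<alpha> \<beta>. scaleC (f x) y = scaleC \<alpha> y + scaleC \<beta> y"
    by (intro exI[of _ "f x"] exI[of _ 0]) simp
qed

lemma rank_le_fr: "rank_le n T \<Longrightarrow> finite_rank T"
  unfolding rank_le_def by blast

lemma zero_in_alg: "standard_operator_algebra \<A> \<Longrightarrow> (\<lambda>x. 0) \<in> \<A>"
  by (rule soaD(4)[OF _ bops_zero rank_le_fr[OF zero_rank_le2]])

lemma rk1_in_alg: "standard_operator_algebra \<A> \<Longrightarrow> f \<in> cdual \<Longrightarrow> rk1 x f \<in> \<A>"
  by (rule soaD(4)[OF _ rk1_bops rank_le_fr[OF rk1_rank_le2]])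

lemma triv_periph:
  assumes "\<not> (\<exists>v::'a::complex_banach. v \<noteq> 0)"
  shows "peripheral_spectrum (T :: 'a \<Rightarrow> 'a) = {}"
proof -
  have all0: "\<And>v::'a. v = 0" using assms by blast
  have "z \<notin> spectrum_op T" for z
  proof (rule notin_specI[OF bops_id'])
    show "T x - scaleC z x = x" for x using all0[of "T x - scaleC z x"] all0[of x] by simp
    show "T x - scaleC z x = x" for x using all0[of "T x - scaleC z x"] all0[of x] by simp
  qed
  then show ?thesis unfolding peripheral_spectrum_def by blast
qed

lemma zero_periph:
  assumes "\<exists>v::'a::complex_banach. v \<noteq> 0"
  shows "peripheral_spectrum (\<lambda>x::'a. 0) = {0}"
proof -
  have "clin (\<lambda>x::'a. 0)" unfolding clin_def by simp
  from periph_form[OF assms bops_zero this, of 0] show ?thesis by simp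
qed

lemma comp_zero: "B \<in> bops \<Longrightarrow> (B ^^ r) \<circ> (\<lambda>x. 0) \<circ> (B ^^ s) = (\<lambda>x. 0)"
  by (simp add: fun_eq_iff funpow_zero_at0)

lemma rank_one_iff:
  fixes T :: "'a::complex_banach \<Rightarrow> 'a"
  shows "rank_one T \<longleftrightarrow> rkle1 T \<and> T \<noteq> (\<lambda>x. 0)"
proof
  assume r: "rank_one T"
  then have fr: "finite_rank T" and c1: "crank T = 1" unfolding rank_one_def by auto
  define P where "P n = (\<exists>V. finite V \<and> card V = n \<and> range T \<subseteq> cspan V)" for n
  obtain V0 where V0: "finite V0" "range T \<subseteq> cspan V0" using fr unfolding finite_rank_def by blast
  have ex: "P (card V0)" unfolding P_def using V0 by blast
  have cr: "crank T = (LEAST n. P n)" unfolding crank_def P_def by simp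
  have "P (crank T)" unfolding cr by (rule LeastI[of P, OF ex])
  then obtain V where V: "finite V" "card V = 1" "range T \<subseteq> cspan V" unfolding P_def c1 by blast
  then obtain u where u: "V = {u}" using card_1_singletonE by blast
  have "rkle1 T" unfolding rkle1_def
  proof (rule exI[of _ u], intro allI)
    fix x
    have "T x \<in> cspan {u}" using V(3) u by blast
    then show "\<exists>c. T x = scaleC c u" unfolding cspan_def by auto
  qed
  moreover have "T \<noteq> (\<lambda>x. 0)"
  proof
    assume T0: "T = (\<lambda>x. 0)"
    have "P 0" unfolding P_def using T0 cspan_empty by (intro exI[of _ "{}"]) auto
    then have "crank T \<le> 0" unfolding cr by (rule Least_le)
    then show False using c1 by simp
  qed
  ultimately show "rkle1 T \<and> T \<noteq> (\<lambda>x. 0)" by blast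
next
  assume a: "rkle1 T \<and> T \<noteq> (\<lambda>x. 0)"
  then obtain u where u: "\<And>x. \<exists>c. T x = scaleC c u" unfolding rkle1_def by blast
  have rng: "range T \<subseteq> cspan {u}"
  proof
    fix y assume "y \<in> range T"
    then obtain x where "y = T x" by blast
    then obtain c where "y = scaleC c u" using u by blast
    then show "y \<in> cspan {u}" unfolding cspan_def by (intro CollectI exI[of _ "\<lambda>v. c"]) simp
  qed
  define P where "P n = (\<exists>V. finite V \<and> card V = n \<and> range T \<subseteq> cspan V)" for n
  have fr: "finite_rank T" unfolding finite_rank_def using rng by (intro exI[of _ "{u}"]) simp
  have P1: "P 1" unfolding P_def using rng by (intro exI[of _ "{u}"]) simp
  have nP0: "\<not> P 0"
  proof
    assume "P 0"
    then obtain V where V: "finite V" "card V = 0" "range T \<subseteq> cspan V" unfolding P_def by blast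
    then have "V = {}" by simp
    then have "range T \<subseteq> {0}" using V(3) by (simp only: cspan_empty)
    then have "T = (\<lambda>x. 0)" by (auto simp: fun_eq_iff)
    then show False using a by blast
  qed
  have cr: "crank T = (LEAST n. P n)" unfolding crank_def P_def by simp
  have "crank T = 1" unfolding cr
  proof (rule Least_equality[of P, OF P1])
    fix n assume "P n"
    then show "1 \<le> n" using nP0 by (cases n) auto
  qed
  then show "rank_one T" unfolding rank_one_def using fr by blast
qed



theorem mainTheorem4:
  fixes \<A>1 :: "('a::complex_banach \<Rightarrow> 'a) set"
    and \<A>2 :: "('b::complex_banach \<Rightarrow> 'b) set"
    and \<Phi> :: "('a \<Rightarrow> 'a) \<Rightarrow> ('b \<Rightarrow> 'b)"
    and r s :: nat
  assumes "standard_operator_algebra \<A>1"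
    and "standard_operator_algebra \<A>2"
    and "r + s \<ge> 1"
    and "\<Phi> ` \<A>1 \<subseteq> \<A>2"
    and "{T \<in> bops. rank_le 2 T} \<subseteq> \<Phi> ` \<A>1"
    and "\<forall>A\<in>\<A>1. \<forall>B\<in>\<A>1.
           peripheral_spectrum ((B ^^ r) \<circ> A \<circ> (B ^^ s)) =
           peripheral_spectrum ((\<Phi> B ^^ r) \<circ> \<Phi> A \<circ> (\<Phi> B ^^ s))"
  shows "(\<forall>A\<in>\<A>1. \<Phi> A = (\<lambda>x. 0) \<longleftrightarrow> A = (\<lambda>x. 0))
       \<and> (\<forall>A\<in>\<A>1. \<forall>B\<in>\<A>1. \<Phi> (\<lambda>x. A x + B x) = (\<lambda>x. \<Phi> A x + \<Phi> B x))
       \<and> (\<forall>A\<in>\<A>1. \<forall>c. \<Phi> (\<lambda>x. scaleC c (A x)) = (\<lambda>x. scaleC c (\<Phi> A x)))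
       \<and> inj_on \<Phi> \<A>1
       \<and> (\<forall>A\<in>\<A>1. rank_one A \<longleftrightarrow> rank_one (\<Phi> A))"
proof -
  note SA1 = assms(1) and SA2 = assms(2) and m = assms(3) and into = assms(4) and surj = assms(5)
    and H = assms(6)
  note sa1 = soaD[OF SA1] and sa2 = soaD[OF SA2]
  have A1b: "\<And>A. A \<in> \<A>1 \<Longrightarrow> A \<in> bops" using sa1(1) by blast
  have Phb: "\<And>A. A \<in> \<A>1 \<Longrightarrow> \<Phi> A \<in> bops" using into sa2(1) by blast
  have Hyp: "\<And>A B. A \<in> \<A>1 \<Longrightarrow> B \<in> \<A>1 \<Longrightarrow> peripheral_spectrum ((B ^^ r) \<circ> A \<circ> (B ^^ s)) =
           peripheral_spectrum ((\<Phi> B ^^ r) \<circ> \<Phi> A \<circ> (\<Phi> B ^^ s))" using H by blast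
  have surj': "\<And>T. T \<in> bops \<Longrightarrow> rank_le 2 T \<Longrightarrow> \<exists>B\<in>\<A>1. T = \<Phi> B" using surj by blast
  have z1: "(\<lambda>x. 0) \<in> \<A>1" by (rule zero_in_alg[OF SA1])
  show ?thesis
  proof (cases "\<exists>v::'a. v \<noteq> 0")
    case False
    have nt2: "\<not> (\<exists>v::'b. v \<noteq> 0)"
    proof
      assume nt2: "\<exists>v::'b. v \<noteq> 0"
      obtain B where B: "B \<in> \<A>1" "(\<lambda>x. 0) = \<Phi> B" using surj'[OF bops_zero zero_rank_le2] by blast
      have "peripheral_spectrum ((B ^^ r) \<circ> B \<circ> (B ^^ s)) = {}" by (rule triv_periph[OF False])
      moreover have "peripheral_spectrum ((\<Phi> B ^^ r) \<circ> \<Phi> B \<circ> (\<Phi> B ^^ s)) = {0}"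
        unfolding B(2)[symmetric] comp_zero[OF bops_zero] by (rule zero_periph[OF nt2])
      ultimately show False using Hyp[OF B(1) B(1)] by simp
    qed
    have fa: "\<And>f::'a \<Rightarrow> 'a. f = (\<lambda>x. 0)" using False by (auto simp: fun_eq_iff)
    have fb: "\<And>f::'b \<Rightarrow> 'b. f = (\<lambda>x. 0)" using nt2 by (auto simp: fun_eq_iff)
    have "\<forall>A\<in>\<A>1. \<Phi> A = (\<lambda>x. 0) \<longleftrightarrow> A = (\<lambda>x. 0)" using fa fb by blast
    moreover have "\<forall>A\<in>\<A>1. \<forall>B\<in>\<A>1. \<Phi> (\<lambda>x. A x + B x) = (\<lambda>x. \<Phi> A x + \<Phi> B x)"
      by (intro ballI) (rule trans[OF fb fb[symmetric]])
    moreover have "\<forall>A\<in>\<A>1. \<forall>c. \<Phi> (\<lambda>x. scaleC c (A x)) = (\<lambda>x. scaleC c (\<Phi> A x))"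
      by (intro ballI allI) (rule trans[OF fb fb[symmetric]])
    moreover have "inj_on \<Phi> \<A>1"
      by (rule inj_onI) (rule trans[OF fa fa[symmetric]])
    moreover have "\<forall>A\<in>\<A>1. rank_one A \<longleftrightarrow> rank_one (\<Phi> A)"
    proof
      fix A assume "A \<in> \<A>1"
      have "\<not> rank_one A" using rank_one_iff fa[of A] by blast
      moreover have "\<not> rank_one (\<Phi> A)" using rank_one_iff fb[of "\<Phi> A"] by blast
      ultimately show "rank_one A \<longleftrightarrow> rank_one (\<Phi> A)" by blast
    qed
    ultimately show ?thesis by blast
  next
    case nt1: True
    have nt2: "\<exists>v::'b. v \<noteq> 0"
    proof (rule ccontr)
      assume n2: "\<not> (\<exists>v::'b. v \<noteq> 0)"
      define O1 where "O1 = (\<lambda>x::'a. 0::'a)"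
      have O1: "O1 \<in> \<A>1" unfolding O1_def by (rule z1)
      have cz: "(O1 ^^ r) \<circ> O1 \<circ> (O1 ^^ s) = O1"
        unfolding O1_def by (rule comp_zero[OF bops_zero])
      have "peripheral_spectrum ((O1 ^^ r) \<circ> O1 \<circ> (O1 ^^ s)) = {0}"
        unfolding cz unfolding O1_def by (rule zero_periph[OF nt1])
      moreover have "peripheral_spectrum ((\<Phi> O1 ^^ r) \<circ> \<Phi> O1 \<circ> (\<Phi> O1 ^^ s)) = {}"
        by (rule triv_periph[OF n2])
      ultimately show False using Hyp[OF O1 O1] by simp
    qed
    have rk: "rkle1 A \<longleftrightarrow> rkle1 (\<Phi> A)" if A: "A \<in> \<A>1" for A
    proof -
      have c1: "rkle1 A \<longleftrightarrow> (\<forall>B\<in>\<A>1. atmost1 (peripheral_spectrum ((B ^^ r) \<circ> A \<circ> (B ^^ s))))"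
      proof
        assume "rkle1 A"
        then show "\<forall>B\<in>\<A>1. atmost1 (peripheral_spectrum ((B ^^ r) \<circ> A \<circ> (B ^^ s)))"
          using R1[OF nt1 A1b[OF A] A1b] by blast
      next
        assume H1: "\<forall>B\<in>\<A>1. atmost1 (peripheral_spectrum ((B ^^ r) \<circ> A \<circ> (B ^^ s)))"
        show "rkle1 A"
        proof (rule ccontr)
          assume "\<not> rkle1 A"
          then obtain S where S: "S \<in> bops" "rank_le 2 S" "\<not> atmost1 (peripheral_spectrum ((S ^^ r) \<circ> A \<circ> (S ^^ s)))"
            using R2[OF A1b[OF A] _ m] by blast
          have "S \<in> \<A>1" by (rule sa1(4)[OF S(1) rank_le_fr[OF S(2)]])
          then show False using H1 S(3) by blast
        qed
      qed
      have c2: "rkle1 (\<Phi> A) \<longleftrightarrow> (\<forall>B\<in>\<A>1. atmost1 (peripheral_spectrum ((\<Phi> B ^^ r) \<circ> \<Phi> A \<circ> (\<Phi> B ^^ s))))"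
      proof
        assume "rkle1 (\<Phi> A)"
        then show "\<forall>B\<in>\<A>1. atmost1 (peripheral_spectrum ((\<Phi> B ^^ r) \<circ> \<Phi> A \<circ> (\<Phi> B ^^ s)))"
          using R1[OF nt2 Phb[OF A] Phb] by blast
      next
        assume H2: "\<forall>B\<in>\<A>1. atmost1 (peripheral_spectrum ((\<Phi> B ^^ r) \<circ> \<Phi> A \<circ> (\<Phi> B ^^ s)))"
        show "rkle1 (\<Phi> A)"
        proof (rule ccontr)
          assume "\<not> rkle1 (\<Phi> A)"
          then obtain S where S: "S \<in> bops" "rank_le 2 S" "\<not> atmost1 (peripheral_spectrum ((S ^^ r) \<circ> \<Phi> A \<circ> (S ^^ s)))"
            using R2[OF Phb[OF A] _ m] by blast
          obtain B where B: "B \<in> \<A>1" "S = \<Phi> B" using surj'[OF S(1,2)] by blast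
          show False using H2 S(3) B by blast
        qed
      qed
      show ?thesis using c1 c2 Hyp[OF A] by simp
    qed
    have coef: "\<exists>f x0. clin f \<and> (\<forall>A\<in>\<A>1. g y ^ (r + s - 1) * g (\<Phi> A y) = f x0 ^ (r + s - 1) * f (A x0))"
      if g: "g \<in> cdual" for g and y :: 'b
    proof -
      obtain B where B: "B \<in> \<A>1" "rk1 y g = \<Phi> B" using surj'[OF rk1_bops[OF g] rk1_rank_le2] by blast
      have Td: "\<Phi> B x = scaleC (g x) y" for x using fun_cong[OF B(2), of x] unfolding rk1_def by simp
      have "rkle1 (\<Phi> B)" unfolding rkle1_def using Td by blast
      then have "rkle1 B" using rk[OF B(1)] by blast
      then obtain x0 f where f: "clin f" and Bd: "\<And>x. B x = scaleC (f x) x0"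
        using rk1_form[OF A1b[OF B(1)]] by blast
      have "\<forall>A\<in>\<A>1. g y ^ (r + s - 1) * g (\<Phi> A y) = f x0 ^ (r + s - 1) * f (A x0)"
      proof
        fix A assume A: "A \<in> \<A>1"
        have e1: "peripheral_spectrum ((B ^^ r) \<circ> A \<circ> (B ^^ s)) = {f x0 ^ (r + s - 1) * f (A x0)}"
          by (rule periph_outer[OF nt1 A1b[OF A] A1b[OF B(1)] f Bd m])
        have e2: "peripheral_spectrum ((\<Phi> B ^^ r) \<circ> \<Phi> A \<circ> (\<Phi> B ^^ s)) = {g y ^ (r + s - 1) * g (\<Phi> A y)}"
          by (rule periph_outer[OF nt2 Phb[OF A] Phb[OF B(1)] cdual_clin[OF g] Td m])
        show "g y ^ (r + s - 1) * g (\<Phi> A y) = f x0 ^ (r + s - 1) * f (A x0)"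
          using e1 e2 Hyp[OF A B(1)] by simp
      qed
      then show ?thesis using f by blast
    qed
    have eqv: "u = u'" if H0: "\<And>y g. g \<in> cdual \<Longrightarrow> g y \<noteq> 0 \<Longrightarrow> g (u y) = g (u' y)"
      and u: "u \<in> bops" and u': "u' \<in> bops" for u u' :: "'b \<Rightarrow> 'b"
    proof
      fix y
      show "u y = u' y"
      proof (cases "y = 0")
        case True then show ?thesis using bopsD(3)[OF u] bopsD(3)[OF u'] by simp
      next
        case False
        show ?thesis by (rule sep_vec[OF False]) (rule H0)
      qed
    qed
    have add: "\<Phi> (\<lambda>x. A x + A' x) = (\<lambda>x. \<Phi> A x + \<Phi> A' x)" if A: "A \<in> \<A>1" and A': "A' \<in> \<A>1" for A A'
    proof -
      have S: "(\<lambda>x. A x + A' x) \<in> \<A>1" by (rule sa1(2)[OF A A'])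
      show ?thesis
      proof (rule eqv)
        fix y :: 'b and g assume g: "g \<in> cdual" and gy: "g y \<noteq> 0"
        obtain f x0 where f: "clin f" and c: "\<forall>A\<in>\<A>1. g y ^ (r + s - 1) * g (\<Phi> A y) = f x0 ^ (r + s - 1) * f (A x0)"
          using coef[OF g] by blast
        have "g y ^ (r + s - 1) * g (\<Phi> (\<lambda>x. A x + A' x) y) = f x0 ^ (r + s - 1) * f (A x0 + A' x0)"
          using c S by simp
        also have "\<dots> = g y ^ (r + s - 1) * (g (\<Phi> A y) + g (\<Phi> A' y))"
          using c A A' clinD(1)[OF f] by (simp add: algebra_simps)
        finally have "g (\<Phi> (\<lambda>x. A x + A' x) y) = g (\<Phi> A y) + g (\<Phi> A' y)" using gy by simp
        then show "g (\<Phi> (\<lambda>x. A x + A' x) y) = g ((\<lambda>x. \<Phi> A x + \<Phi> A' x) y)" by (simp add: cdualD[OF g])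
      qed (use Phb[OF S] bops_add[OF Phb[OF A] Phb[OF A']] in auto)
    qed
    have hom: "\<Phi> (\<lambda>x. scaleC c (A x)) = (\<lambda>x. scaleC c (\<Phi> A x))" if A: "A \<in> \<A>1" for A c
    proof -
      have S: "(\<lambda>x. scaleC c (A x)) \<in> \<A>1" by (rule sa1(3)[OF A])
      show ?thesis
      proof (rule eqv)
        fix y :: 'b and g assume g: "g \<in> cdual" and gy: "g y \<noteq> 0"
        obtain f x0 where f: "clin f" and cc: "\<forall>A\<in>\<A>1. g y ^ (r + s - 1) * g (\<Phi> A y) = f x0 ^ (r + s - 1) * f (A x0)"
          using coef[OF g] by blast
        have "g y ^ (r + s - 1) * g (\<Phi> (\<lambda>x. scaleC c (A x)) y) = f x0 ^ (r + s - 1) * f (scaleC c (A x0))"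
          using cc S by simp
        also have "\<dots> = g y ^ (r + s - 1) * (c * g (\<Phi> A y))"
          using cc A clinD(2)[OF f] by (simp add: algebra_simps)
        finally have "g (\<Phi> (\<lambda>x. scaleC c (A x)) y) = c * g (\<Phi> A y)" using gy by simp
        then show "g (\<Phi> (\<lambda>x. scaleC c (A x)) y) = g ((\<lambda>x. scaleC c (\<Phi> A x)) y)" by (simp add: cdualD[OF g])
      qed (use Phb[OF S] bops_scale[OF Phb[OF A]] in auto)
    qed
    have zf: "A = (\<lambda>x. 0)" if A: "A \<in> \<A>1" and PA: "\<Phi> A = (\<lambda>x. 0)" for A
    proof
      fix x
      show "A x = 0"
      proof (cases "x = 0")
        case True then show ?thesis using bopsD(3)[OF A1b[OF A]] by simp
      next
        case False
        show ?thesis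
        proof (rule sep_vec[OF False])
          fix f :: "'a \<Rightarrow> complex" assume f: "f \<in> cdual" and fx: "f x \<noteq> 0"
          define B where "B = rk1 x f"
          have B: "B \<in> \<A>1" unfolding B_def by (rule rk1_in_alg[OF SA1 f])
          have Bd: "B z = scaleC (f z) x" for z unfolding B_def rk1_def by simp
          have e1: "peripheral_spectrum ((B ^^ r) \<circ> A \<circ> (B ^^ s)) = {f x ^ (r + s - 1) * f (A x)}"
            by (rule periph_outer[OF nt1 A1b[OF A] A1b[OF B] cdual_clin[OF f] Bd m])
          have e2: "peripheral_spectrum ((\<Phi> B ^^ r) \<circ> \<Phi> A \<circ> (\<Phi> B ^^ s)) = {0}"
            unfolding PA comp_zero[OF Phb[OF B]] by (rule zero_periph[OF nt2])
          from e1 e2 Hyp[OF A B] have "f x ^ (r + s - 1) * f (A x) = 0" by simp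
          then show "f (A x) = f 0" using fx by (simp add: cdualD[OF f])
        qed
      qed
    qed
    have zb: "\<Phi> A = (\<lambda>x. 0)" if A: "A \<in> \<A>1" and A0: "A = (\<lambda>x. 0)" for A
    proof -
      have "(\<lambda>x. A x + A x) = A" using A0 by simp
      then have "\<Phi> A = (\<lambda>x. \<Phi> A x + \<Phi> A x)" using add[OF A A] by simp
      then have "\<Phi> A x = \<Phi> A x + \<Phi> A x" for x by (metis)
      then show ?thesis by (simp add: fun_eq_iff)
    qed
    have inj: "inj_on \<Phi> \<A>1"
    proof (rule inj_onI)
      fix A A' assume A: "A \<in> \<A>1" and A': "A' \<in> \<A>1" and e: "\<Phi> A = \<Phi> A'"
      have C: "(\<lambda>x. scaleC (-1) (A' x)) \<in> \<A>1" by (rule sa1(3)[OF A'])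
      have D: "(\<lambda>x. A x + scaleC (-1) (A' x)) \<in> \<A>1" by (rule sa1(2)[OF A C])
      have "\<Phi> (\<lambda>x. A x + scaleC (-1) (A' x)) = (\<lambda>x. \<Phi> A x + \<Phi> (\<lambda>x. scaleC (-1) (A' x)) x)"
        by (rule add[OF A C])
      also have "\<dots> = (\<lambda>x. 0)" unfolding hom[OF A'] e by (simp add: scaleC_minus1)
      finally have "(\<lambda>x. A x + scaleC (-1) (A' x)) = (\<lambda>x. 0)" by (rule zf[OF D])
      then show "A = A'" by (auto simp: fun_eq_iff scaleC_minus1 dest: fun_cong)
    qed
    have rko: "rank_one A \<longleftrightarrow> rank_one (\<Phi> A)" if A: "A \<in> \<A>1" for A
      using rank_one_iff[of A] rank_one_iff[of "\<Phi> A"] rk[OF A] zf[OF A] zb[OF A] by blast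
    show ?thesis using zf zb add hom inj rko by blast
  qed
qed


end
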